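(* Let $X\in\mathcal M_{\mathbf r}$, $V\in\mathrm T_X\mathcal M_{\mathbf r}$, $Z\in\mathbb R^{n_1\times\cdots\times n_d}$ and $i,j\in[d]$. The tensor $W:=\mathcal P_X^i(\mathrm D_V\mathcal P_X^j)(Z)$ lies in the range of $\mathcal P_X^i$ and can be written $W(i_1,\dots,i_d)=U_1(i_1)\cdots U_{i-1}(i_{i-1})\,\delta\tilde V_i(i_i)\,\tilde U_{i+1}(i_{i+1})\cdots\tilde U_d(i_d)$ for a core $\delta\tilde V_i\in\mathbb R^{r_{i-1}\times n_i\times r_i}$, so that $W^{<i>}=(I_{n_i}\otimes X_{\le i-1})\delta\tilde V_i^L\tilde X_{\ge i+1}^\top$. If a matrix $B\in\mathbb R^{n_ir_{i-1}\times r_i}$ satisfies $W^{<i>}=(I_{n_i}\otimes X_{\le i-1})B\tilde X_{\ge i+1}^\top$, then $B=\delta\tilde V_i^L$.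
   Context: Fix $d\ge2$, positive integers $n_1,\dots,n_d$, $\mathbf r=(r_1,\dots,r_{d-1})$, $r_0=r_d=1$. Flattening $Z^{<\mu>}\in\mathbb R^{(n_1\cdots n_\mu)\times(n_{\mu+1}\cdots n_d)}$: rows indexed by $(i_1,\dots,i_\mu)$, columns by $(i_{\mu+1},\dots,i_d)$, colexicographic order. $\mathcal M_{\mathbf r}$: tensors with $(\mathrm{rank}\,Z^{<1>},\dots,\mathrm{rank}\,Z^{<d-1>})=\mathbf r$, a Riemannian submanifold of Euclidean space. $X$ has a minimal (sizes equal to TT-rank) left-orthogonal TT decomposition $U_1,\dots,U_d$ ($U_k\in\mathbb R^{r_{k-1}\times n_k\times r_k}$, $X(i_1,\dots,i_d)=U_1(i_1)\cdots U_d(i_d)$, $(U_k^L)^\top U_k^L=I$ for $k<d$, where $U^L=U^{<2>}$, $U^R=U^{<1>}$) and a minimal right-orthogonal TT decomposition $\tilde U_1,\dots,\tilde U_d$ ($\tilde U_k^R(\tilde U_k^R)^\top=I$ for $k\ge2$). Interface matrices: $X_{\le0}=1$, $X_{\le k}=(I_{n_k}\otimes X_{\le k-1})U_k^L$; $\tilde X_{\ge d+1}=1$, $\tilde X_{\ge k}^\top=\tilde U_k^R(\tilde X_{\ge k+1}^\top\otimes I_{n_k})$. Projectors for $Y\in\mathcal M_{\mathbf r}$ (independent of decomposition choices): $(\mathcal P_Y^kZ)^{<k>}=(I_{n_k}\otimes Y_{\le k-1}Y_{\le k-1}^\top-Y_{\le k}Y_{\le k}^\top)Z^{<k>}\tilde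 Y_{\ge k+1}\tilde Y_{\ge k+1}^\top$ for $k\in[d-1]$, $(\mathcal P_Y^dZ)^{<d>}=(I_{n_d}\otimes Y_{\le d-1}Y_{\le d-1}^\top)Z^{<d>}$. $(\mathrm D_V\mathcal P_X^j)Z:=\lim_{t\to0}(\mathcal P^j_{c(t)}Z-\mathcal P^j_{c(0)}Z)/t$ for a smooth curve $c$ in $\mathcal M_{\mathbf r}$ with $c(0)=X$, $c'(0)=V$. *)

theory Defs
  imports Complex_Main "Jordan_Normal_Form.DL_Rank"
begin

(* Tensors of order d = length n with mode sizes n!0,...,n!(d-1) (0-based indices).
   A tensor is a function on index lists, zero outside the valid index set. *)

definition tidx :: "nat list \<Rightarrow> nat list set" where
  "tidx n = {ix. length ix = length n \<and> (\<forall>k<length n. ix!k < n!k)}"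

definition tensors :: "nat list \<Rightarrow> (nat list \<Rightarrow> real) set" where
  "tensors n = {Z. \<forall>ix. ix \<notin> tidx n \<longrightarrow> Z ix = 0}"

(* colexicographic linear index: first index runs fastest *)
fun lin :: "nat list \<Rightarrow> nat list \<Rightarrow> nat" where
  "lin (m#ms) (i#is) = i + m * lin ms is"
| "lin _ _ = 0"

fun unlin :: "nat list \<Rightarrow> nat \<Rightarrow> nat list" where
  "unlin [] x = []"
| "unlin (m#ms) x = (x mod m) # unlin ms (x div m)"

definition flat :: "nat list \<Rightarrow> nat \<Rightarrow> (nat list \<Rightarrow> real) \<Rightarrow> real mat" where
  "flat n mu Z = mat (prod_list (take mu n)) (prod_list (drop mu n))
      (\<lambda>(a,b). Z (unlin (take mu n) a @ unlin (drop mu n) b))"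

definition unflat :: "nat list \<Rightarrow> nat \<Rightarrow> real mat \<Rightarrow> (nat list \<Rightarrow> real)" where
  "unflat n mu M = (\<lambda>ix. if ix \<in> tidx n
      then M $$ (lin (take mu n) (take mu ix), lin (drop mu n) (drop mu ix)) else 0)"

definition mrank :: "real mat \<Rightarrow> nat" where
  "mrank A = vec_space.rank (dim_row A) A"

(* TT ranks with r_0 = r_d = 1; r = [r_1,...,r_{d-1}] *)
definition rr :: "nat list \<Rightarrow> nat \<Rightarrow> nat" where
  "rr r k = (if k = 0 \<or> k = length r + 1 then 1 else r!(k-1))"

definition Mr :: "nat list \<Rightarrow> nat list \<Rightarrow> (nat list \<Rightarrow> real) set" where
  "Mr n r = {X \<in> tensors n. \<forall>mu\<in>{1..<length n}. mrank (flat n mu X) = r!(mu-1)}"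

(* Kronecker product, standard ordering: row (a,i) \<mapsto> a * dim_row B + i *)
definition kron :: "real mat \<Rightarrow> real mat \<Rightarrow> real mat" where
  "kron A B = mat (dim_row A * dim_row B) (dim_col A * dim_col B)
     (\<lambda>(p,q). A $$ (p div dim_row B, q div dim_col B) * B $$ (p mod dim_row B, q mod dim_col B))"

(* cores: U k i is the r_{k-1} x r_k matrix U_k(i), k \<in> {1..d}, i < n_k *)
type_synonym cores = "nat \<Rightarrow> nat \<Rightarrow> real mat"

definition core_ok :: "nat list \<Rightarrow> nat list \<Rightarrow> nat \<Rightarrow> (nat \<Rightarrow> real mat) \<Rightarrow> bool" where
  "core_ok n r k C = (\<forall>i<n!(k-1). C i \<in> carrier_mat (rr r (k-1)) (rr r k))"

(* U^L = U^{<2>}: rows (alpha,i) colex, i.e. alpha + r_{k-1} * i *)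
definition coreL :: "nat list \<Rightarrow> nat list \<Rightarrow> nat \<Rightarrow> (nat \<Rightarrow> real mat) \<Rightarrow> real mat" where
  "coreL n r k C = mat (rr r (k-1) * n!(k-1)) (rr r k)
     (\<lambda>(a,b). C (a div rr r (k-1)) $$ (a mod rr r (k-1), b))"

(* U^R = U^{<1>}: columns (i,beta) colex, i.e. i + n_k * beta *)
definition coreR :: "nat list \<Rightarrow> nat list \<Rightarrow> nat \<Rightarrow> (nat \<Rightarrow> real mat) \<Rightarrow> real mat" where
  "coreR n r k C = mat (rr r (k-1)) (n!(k-1) * rr r k)
     (\<lambda>(a,b). C (b mod n!(k-1)) $$ (a, b div n!(k-1)))"

definition tt_val :: "nat \<Rightarrow> cores \<Rightarrow> nat list \<Rightarrow> real" where
  "tt_val d C ix = (foldr (\<lambda>k M. C k (ix!(k-1)) * M) [1..<d+1] (1\<^sub>m 1)) $$ (0,0)"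

definition is_TT :: "nat list \<Rightarrow> nat list \<Rightarrow> cores \<Rightarrow> (nat list \<Rightarrow> real) \<Rightarrow> bool" where
  "is_TT n r U X = ((\<forall>k\<in>{1..length n}. core_ok n r k (U k))
      \<and> (\<forall>ix\<in>tidx n. X ix = tt_val (length n) U ix))"

definition left_orth_TT :: "nat list \<Rightarrow> nat list \<Rightarrow> cores \<Rightarrow> (nat list \<Rightarrow> real) \<Rightarrow> bool" where
  "left_orth_TT n r U X = (X \<in> Mr n r \<and> is_TT n r U X \<and>
     (\<forall>k\<in>{1..<length n}. (coreL n r k (U k))\<^sup>T * coreL n r k (U k) = 1\<^sub>m (rr r k)))"

definition right_orth_TT :: "nat list \<Rightarrow> nat list \<Rightarrow> cores \<Rightarrow> (nat list \<Rightarrow> real) \<Rightarrow> bool" where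
  "right_orth_TT n r U X = (X \<in> Mr n r \<and> is_TT n r U X \<and>
     (\<forall>k\<in>{2..length n}. coreR n r k (U k) * (coreR n r k (U k))\<^sup>T = 1\<^sub>m (rr r (k-1))))"

fun Xle :: "nat list \<Rightarrow> nat list \<Rightarrow> cores \<Rightarrow> nat \<Rightarrow> real mat" where
  "Xle n r U 0 = 1\<^sub>m 1"
| "Xle n r U (Suc k) = kron (1\<^sub>m (n!k)) (Xle n r U k) * coreL n r (Suc k) (U (Suc k))"

(* XgeT_aux m = \<tilde>X_{\<ge>d+1-m}^T *)
fun XgeT_aux :: "nat list \<Rightarrow> nat list \<Rightarrow> cores \<Rightarrow> nat \<Rightarrow> real mat" where
  "XgeT_aux n r U 0 = 1\<^sub>m 1"
| "XgeT_aux n r U (Suc m) =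
     coreR n r (length n - m) (U (length n - m)) * kron (XgeT_aux n r U m) (1\<^sub>m (n!(length n - m - 1)))"

definition XgeT :: "nat list \<Rightarrow> nat list \<Rightarrow> cores \<Rightarrow> nat \<Rightarrow> real mat" where
  "XgeT n r U k = XgeT_aux n r U (length n + 1 - k)"

(* tangent-space projectors P_Y^k, defined via some minimal left-/right-orthogonal
   decompositions of Y (they are independent of this choice) *)
definition Pk :: "nat list \<Rightarrow> nat list \<Rightarrow> (nat list \<Rightarrow> real) \<Rightarrow> nat \<Rightarrow> (nat list \<Rightarrow> real) \<Rightarrow> (nat list \<Rightarrow> real)" where
  "Pk n r Y k Z = (let U = (SOME U. left_orth_TT n r U Y);
                       V = (SOME V. right_orth_TT n r V Y);
                       A = Xle n r U (k-1); B = Xle n r U k; G = XgeT n r V (k+1) in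
     if k < length n then
       unflat n k ((kron (1\<^sub>m (n!(k-1))) (A * A\<^sup>T) - B * B\<^sup>T) * flat n k Z * (G\<^sup>T * G))
     else unflat n k (kron (1\<^sub>m (n!(k-1))) (A * A\<^sup>T) * flat n k Z))"

definition smooth_on :: "real set \<Rightarrow> (real \<Rightarrow> real) \<Rightarrow> bool" where
  "smooth_on S f = (\<exists>fs. fs 0 = f \<and>
     (\<forall>m. \<forall>t\<in>S. (fs m has_real_derivative fs (Suc m) t) (at t)))"

definition smooth_curve :: "nat list \<Rightarrow> nat list \<Rightarrow> (real \<Rightarrow> nat list \<Rightarrow> real)
     \<Rightarrow> (nat list \<Rightarrow> real) \<Rightarrow> (nat list \<Rightarrow> real) \<Rightarrow> bool" where
  "smooth_curve n r c X V = (\<exists>\<epsilon>>0. (\<forall>t\<in>{-\<epsilon><..<\<epsilon>}. c t \<in> Mr n r)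
      \<and> (\<forall>ix. smooth_on {-\<epsilon><..<\<epsilon>} (\<lambda>t. c t ix))
      \<and> c 0 = X \<and> (\<forall>ix. ((\<lambda>t. c t ix) has_real_derivative V ix) (at 0)))"

definition tangent_space :: "nat list \<Rightarrow> nat list \<Rightarrow> (nat list \<Rightarrow> real) \<Rightarrow> (nat list \<Rightarrow> real) set" where
  "tangent_space n r X = {V. \<exists>c. smooth_curve n r c X V}"

definition is_DP :: "nat list \<Rightarrow> nat list \<Rightarrow> (real \<Rightarrow> nat list \<Rightarrow> real) \<Rightarrow> nat
     \<Rightarrow> (nat list \<Rightarrow> real) \<Rightarrow> (nat list \<Rightarrow> real) \<Rightarrow> bool" where
  "is_DP n r c j Z D = (\<forall>ix. ((\<lambda>t. (Pk n r (c t) j Z ix - Pk n r (c 0) j Z ix) / t)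
                              \<longlongrightarrow> D ix) (at 0))"

end

theory Submission
  imports Defs
begin


lemma length_unlin[simp]: "length (unlin ms x) = length ms"
  by (induction ms arbitrary: x) auto

lemma unlin_nth_less:
  assumes "\<forall>j<length ms. ms!j > 0" "j < length ms"
  shows "unlin ms x ! j < ms ! j"
  using assms
proof (induction ms arbitrary: x j)
  case Nil then show ?case by simp
next
  case (Cons m ms)
  show ?case
  proof (cases j)
    case 0 then show ?thesis using Cons.prems by auto
  next
    case (Suc j')
    have "\<forall>j<length ms. ms!j > 0" using Cons.prems(1) by force
    then have "unlin ms (x div m) ! j' < ms ! j'" using Cons.IH Suc Cons.prems(2) by simp
    then show ?thesis using Suc by simp
  qed
qed

lemma lin_unlin: "x < prod_list ms \<Longrightarrow> lin ms (unlin ms x) = x"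
proof (induction ms arbitrary: x)
  case Nil then show ?case by simp
next
  case (Cons m ms)
  have "x div m < prod_list ms" using Cons.prems
    by (metis less_mult_imp_div_less mult.commute prod_list.Cons)
  then show ?case using Cons.IH[of "x div m"] by simp
qed

lemma lin_less:
  assumes "length js = length ms" "\<forall>j<length ms. js!j < ms!j"
  shows "lin ms js < prod_list ms"
  using assms
proof (induction ms arbitrary: js)
  case Nil then show ?case by simp
next
  case (Cons m ms)
  then obtain i js' where js: "js = i # js'" by (cases js) auto
  have i: "i < m" using Cons.prems js by auto
  have "lin ms js' < prod_list ms" using Cons.IH[of js'] Cons.prems js by force
  then have "lin ms js' + 1 \<le> prod_list ms" by simp
  then have "m * (lin ms js' + 1) \<le> m * prod_list ms" by (rule mult_le_mono2)
  then show ?case using js i by (simp add: algebra_simps)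
qed

lemma unlin_lin:
  assumes "length js = length ms" "\<forall>j<length ms. js!j < ms!j"
  shows "unlin ms (lin ms js) = js"
  using assms
proof (induction ms arbitrary: js)
  case Nil then show ?case by simp
next
  case (Cons m ms)
  then obtain i js' where js: "js = i # js'" by (cases js) auto
  have i: "i < m" using Cons.prems js by auto
  have IH: "unlin ms (lin ms js') = js'" using Cons.IH[of js'] Cons.prems js by force
  have "(i + m * lin ms js') mod m = i" using i by simp
  moreover have "(i + m * lin ms js') div m = lin ms js'" using i by simp
  ultimately show ?case using js IH by simp
qed

lemma lin_snoc:
  assumes "length js = length ms"
  shows "lin (ms @ [m]) (js @ [i]) = lin ms js + prod_list ms * i"
  using assms
proof (induction ms arbitrary: js)
  case Nil then show ?case by simp
next
  case (Cons m' ms)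
  then obtain i' js' where js: "js = i' # js'" by (cases js) auto
  then show ?case using Cons by (simp add: algebra_simps)
qed

lemma sum_split_prod:
  fixes g :: "nat \<Rightarrow> 'a::comm_monoid_add"
  shows "(\<Sum>q<m1*m2. g q) = (\<Sum>a<m1. \<Sum>b<m2. g (a*m2+b))"
proof (induction m1)
  case 0 then show ?case by simp
next
  case (Suc m1)
  have "(\<Sum>q<Suc m1*m2. g q) = (\<Sum>q<m1*m2. g q) + (\<Sum>q\<in>{m1*m2..<m1*m2+m2}. g q)"
    by (simp add: lessThan_atLeast0 sum.atLeastLessThan_concat add.commute)
  also have "(\<Sum>q\<in>{m1*m2..<m1*m2+m2}. g q) = (\<Sum>b<m2. g (m1*m2+b))"
    using sum.shift_bounds_nat_ivl[of g 0 "m1*m2" m2]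
    by (simp add: lessThan_atLeast0 add.commute)
  finally show ?case using Suc by simp
qed

lemma sum_single_nat:
  fixes f :: "nat \<Rightarrow> 'a::comm_monoid_add"
  assumes "k < m" "\<And>b. b < m \<Longrightarrow> b \<noteq> k \<Longrightarrow> f b = 0"
  shows "(\<Sum>b<m. f b) = f k"
  using assms by (subst sum.remove[of _ k]) (auto intro!: sum.neutral)

lemma kron_dims[simp]:
  "dim_row (kron A B) = dim_row A * dim_row B" "dim_col (kron A B) = dim_col A * dim_col B"
  by (simp_all add: kron_def)

lemma kron_carrier: "kron A B \<in> carrier_mat (dim_row A * dim_row B) (dim_col A * dim_col B)"
  by (rule carrier_matI) simp_all

lemma kron_index:
  "p < dim_row A * dim_row B \<Longrightarrow> q < dim_col A * dim_col B \<Longrightarrow>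
   kron A B $$ (p,q) = A $$ (p div dim_row B, q div dim_col B) * B $$ (p mod dim_row B, q mod dim_col B)"
  by (simp add: kron_def)

lemma div_mod_lt:
  fixes p m1 m2 :: nat
  assumes "p < m1 * m2"
  shows "p div m2 < m1" "p mod m2 < m2"
proof -
  show "p div m2 < m1" using assms by (simp add: less_mult_imp_div_less)
  have "m2 > 0" using assms by (cases m2) auto
  then show "p mod m2 < m2" by simp
qed

lemma kron_mult:
  fixes A B C D :: "real mat"
  assumes "dim_col A = dim_row C" "dim_col B = dim_row D"
  shows "kron A B * kron C D = kron (A * C) (B * D)"
proof (rule eq_matI)
  fix p s assume p: "p < dim_row (kron (A * C) (B * D))" and s: "s < dim_col (kron (A * C) (B * D))"
  have p': "p < dim_row A * dim_row B" and s': "s < dim_col C * dim_col D" using p s by auto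
  note pp = div_mod_lt[OF p'] and ss = div_mod_lt[OF s']
  have "(kron A B * kron C D) $$ (p,s) = (\<Sum>q<dim_col A * dim_col B.
      kron A B $$ (p,q) * kron C D $$ (q,s))"
    using p' s' assms by (simp add: index_mult_mat scalar_prod_def row_def col_def lessThan_atLeast0)
  also have "\<dots> = (\<Sum>a<dim_col A. \<Sum>b<dim_col B. kron A B $$ (p,a*dim_col B+b) * kron C D $$ (a*dim_col B+b,s))"
    by (rule sum_split_prod)
  also have "\<dots> = (\<Sum>a<dim_col A. \<Sum>b<dim_col B.
       (A $$ (p div dim_row B, a) * C $$ (a, s div dim_col D)) * (B $$ (p mod dim_row B, b) * D $$ (b, s mod dim_col D)))"
  proof (intro sum.cong refl)
    fix a b assume a: "a \<in> {..<dim_col A}" and b: "b \<in> {..<dim_col B}"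
    have q: "a*dim_col B+b < dim_col A * dim_col B"
    proof -
      have "a*dim_col B+b < a*dim_col B + dim_col B" using b by simp
      also have "\<dots> = (a+1)*dim_col B" by simp
      also have "\<dots> \<le> dim_col A * dim_col B" using a by (intro mult_right_mono) auto
      finally show ?thesis .
    qed
    have bpos: "dim_col B > 0" using b by auto
    have d1: "(a*dim_col B+b) div dim_col B = a" using b by simp
    have d2: "(a*dim_col B+b) mod dim_col B = b" using b by simp
    have d1': "(a*dim_row D+b) div dim_row D = a" using d1 assms by simp
    have d2': "(a*dim_row D+b) mod dim_row D = b" using d2 assms by simp
    have b': "b < dim_row D" using b assms by simp
    show "kron A B $$ (p,a*dim_col B+b) * kron C D $$ (a*dim_col B+b,s) =
       (A $$ (p div dim_row B, a) * C $$ (a, s div dim_col D)) * (B $$ (p mod dim_row B, b) * D $$ (b, s mod dim_col D))"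
      using q p' s' assms by (simp add: kron_index d1 d2 d1' d2' b')
  qed
  also have "\<dots> = (\<Sum>a<dim_col A. A $$ (p div dim_row B, a) * C $$ (a, s div dim_col D)) *
       (\<Sum>b<dim_col B. B $$ (p mod dim_row B, b) * D $$ (b, s mod dim_col D))"
    by (simp add: sum_product mult_ac)
  also have "\<dots> = kron (A * C) (B * D) $$ (p,s)"
    using p' s' pp ss assms
    by (simp add: kron_index index_mult_mat scalar_prod_def row_def col_def lessThan_atLeast0)
  finally show "(kron A B * kron C D) $$ (p,s) = kron (A * C) (B * D) $$ (p,s)" .
qed (use assms in auto)

lemma kron_transpose: "(kron A B)\<^sup>T = kron A\<^sup>T B\<^sup>T"
proof (rule eq_matI)
  fix p q assume "p < dim_row (kron A\<^sup>T B\<^sup>T)" "q < dim_col (kron A\<^sup>T B\<^sup>T)"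
  then show "(kron A B)\<^sup>T $$ (p, q) = kron A\<^sup>T B\<^sup>T $$ (p, q)"
    by (simp add: kron_index div_mod_lt)
qed auto

lemma kron_one: "kron (1\<^sub>m a) (1\<^sub>m b) = (1\<^sub>m (a*b) :: real mat)"
proof (rule eq_matI)
  fix p q assume p: "p < dim_row (1\<^sub>m (a*b) :: real mat)" and q: "q < dim_col (1\<^sub>m (a*b) :: real mat)"
  then have p': "p < a*b" and q': "q < a*b" by auto
  have "(p div b = q div b \<and> p mod b = q mod b) = (p = q)"
    by (metis div_mult_mod_eq)
  then show "kron (1\<^sub>m a) (1\<^sub>m b) $$ (p, q) = (1\<^sub>m (a*b) :: real mat) $$ (p, q)"
    using p' q' div_mod_lt[OF p'] div_mod_lt[OF q'] by (auto simp: kron_index)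
qed auto

context vec_space
begin

lemma rank_mult_le_left:
  assumes A: "A \<in> carrier_mat n m" and B: "B \<in> carrier_mat m k"
  shows "rank (A * B) \<le> rank A"
proof -
  have AB: "A * B \<in> carrier_mat n k" using A B by simp
  have sub: "span (set (cols (A * B))) \<subseteq> span (set (cols A))"
  proof -
    have "col_space (A * B) \<subseteq> col_space A"
    proof
      fix y assume "y \<in> col_space (A * B)"
      then obtain x where x: "x \<in> carrier_vec k" "(A * B) *\<^sub>v x = y" and y: "y \<in> carrier_vec n"
      proof -
        have "dim_row A = n" "dim_col B = k" using A B by auto
        then show ?thesis using that col_space_eq[OF AB] \<open>y \<in> col_space (A * B)\<close> by auto
      qed
      have "A *\<^sub>v (B *\<^sub>v x) = y" using x A B by (metis assoc_mult_mat_vec)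
      moreover have "B *\<^sub>v x \<in> carrier_vec m" using B by (intro carrier_vecI) simp
      ultimately show "y \<in> col_space A" using col_space_eq[OF A] A y by auto
    qed
    then show ?thesis unfolding col_space_def .
  qed
  have sA: "subspace class_ring (span (set (cols A))) V"
    by (metis A cols_dim carrier_matD(1) span_is_subspace)
  have sAB: "subspace class_ring (span (set (cols (A * B)))) V"
    by (metis AB cols_dim carrier_matD(1) span_is_subspace)
  have subspace: "subspace class_ring (span (set (cols (A * B)))) (vs (span (set (cols A))))"
    using nested_subspaces[OF sA sAB sub] .
  have fA: "vectorspace.fin_dim class_ring (vs (span (set (cols A))))"
    using fin_dim_span_cols[OF A] .
  have fAB: "vectorspace.fin_dim class_ring (span_vs (set (cols (A * B))))"
    using fin_dim_span_cols[OF AB] by simp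
  show ?thesis unfolding rank_def
    using vectorspace.subspace_dim[OF subspace_is_vs[OF sA] subspace fA] fAB by auto
qed

lemma rank_low_if_kernel:
  assumes A: "A \<in> carrier_mat n nc" and u: "u \<in> carrier_vec nc" "u \<noteq> 0\<^sub>v nc" "A *\<^sub>v u = 0\<^sub>v n"
  shows "rank A < nc"
proof (rule ccontr)
  assume "\<not> rank A < nc"
  then have r: "rank A = nc" using rank_le_nc[OF A] by simp
  show False
  proof (cases "distinct (cols A)")
    case True
    then have "lin_indpt (set (cols A))" using full_rank_lin_indpt[OF A r] by auto
    then show False using lin_depI[OF A u True] by blast
  next
    case False
    obtain S where S: "maximal S (\<lambda>T. T \<subseteq> set (cols A) \<and> lin_indpt T)"
      using maximal_exists[of "(\<lambda>T. T \<subseteq> set (cols A) \<and> lin_indpt T)" "card (set (cols A))" "{}"]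
      by (meson List.finite_set card_mono empty_iff empty_subsetI finite_lin_indpt2 rev_finite_subset)
    then have "card S \<le> card (set (cols A))" by (simp add: card_mono maximal_def)
    moreover have "card (set (cols A)) < nc"
      using False A card_distinct[of "cols A"] card_length[of "cols A"] by fastforce
    ultimately have "card S < nc" by simp
    then show False using rank_card_indpt[OF A S] r by simp
  qed
qed

end

lemma mrank_mult_kernel:
  fixes Y Z :: "real mat"
  assumes Y: "Y \<in> carrier_mat P r" and Z: "Z \<in> carrier_mat r Q"
    and u: "u \<in> carrier_vec r" "u \<noteq> 0\<^sub>v r" "Y *\<^sub>v u = 0\<^sub>v P"
  shows "mrank (Y * Z) < r"
proof -
  have "mrank (Y * Z) = vec_space.rank P (Y * Z)" unfolding mrank_def using Y by simp
  also have "\<dots> \<le> vec_space.rank P Y" using vec_space.rank_mult_le_left[OF Y Z] .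
  also have "\<dots> < r" using vec_space.rank_low_if_kernel[OF Y u] .
  finally show ?thesis .
qed

lemma mrank_mult_cokernel:
  fixes Y Z :: "real mat"
  assumes Y: "Y \<in> carrier_mat P r" and Z: "Z \<in> carrier_mat r Q"
    and v: "v \<in> carrier_vec r" "v \<noteq> 0\<^sub>v r"
    and vZ: "\<And>j. j < Q \<Longrightarrow> (\<Sum>a<r. v $ a * Z $$ (a, j)) = 0"
  shows "mrank (Y * Z) < r"
proof -
  define s where "s = v \<bullet> v"
  have s_def': "s = (\<Sum>a<r. v $ a * v $ a)" using v unfolding s_def scalar_prod_def
    by (simp add: lessThan_atLeast0)
  obtain a0 where a0: "a0 < r" "v $ a0 \<noteq> 0" using v
    by (metis carrier_vecD eq_vecI index_zero_vec(1) index_zero_vec(2))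
  have "s > 0"
  proof -
    have "s \<ge> v $ a0 * v $ a0" unfolding s_def'
      using a0 by (intro member_le_sum) auto
    moreover have "v $ a0 * v $ a0 > 0" using a0(2) by (cases "v$a0 > 0") (auto simp: mult_neg_neg)
    ultimately show ?thesis by simp
  qed
  define Pv where "Pv = (1\<^sub>m r :: real mat) - (1 / s) \<cdot>\<^sub>m mat r r (\<lambda>(a,b). v $ a * v $ b)"
  have Pv: "Pv \<in> carrier_mat r r" unfolding Pv_def by (rule carrier_matI) simp_all
  have PZ: "Pv * Z = Z"
  proof (rule eq_matI)
    fix a j assume a: "a < dim_row Z" and j: "j < dim_col Z"
    then have a': "a < r" and j': "j < Q" using Z by auto
    have "(Pv * Z) $$ (a, j) = (\<Sum>b<r. Pv $$ (a,b) * Z $$ (b,j))"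
      using a' j' Pv Z by (simp add: index_mult_mat scalar_prod_def lessThan_atLeast0)
    also have "\<dots> = (\<Sum>b<r. (if a = b then 1 else 0) * Z $$ (b,j)) - (1/s) * v $ a * (\<Sum>b<r. v $ b * Z $$ (b,j))"
      using a' by (simp add: Pv_def sum_subtractf sum_distrib_left algebra_simps)
    also have "\<dots> = Z $$ (a, j)" using vZ[OF j'] a' by (subst sum_single_nat[of a]) auto
    finally show "(Pv * Z) $$ (a, j) = Z $$ (a, j)" .
  qed (use Pv Z in auto)
  have Pvv: "Pv *\<^sub>v v = 0\<^sub>v r"
  proof (rule eq_vecI)
    fix a assume a: "a < dim_vec (0\<^sub>v r :: real vec)"
    then have a': "a < r" by simp
    have "(Pv *\<^sub>v v) $ a = (\<Sum>b<r. Pv $$ (a,b) * v $ b)"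
      using a' Pv v by (simp add: scalar_prod_def lessThan_atLeast0)
    also have "\<dots> = (\<Sum>b<r. (if a = b then 1 else 0) * v $ b) - (1/s) * v $ a * (\<Sum>b<r. v $ b * v $ b)"
      using a' by (simp add: Pv_def sum_subtractf sum_distrib_left algebra_simps)
    also have "\<dots> = 0" using a' \<open>s > 0\<close> s_def' by (subst sum_single_nat[of a]) auto
    finally show "(Pv *\<^sub>v v) $ a = (0\<^sub>v r) $ a" using a' by simp
  qed (use Pv in auto)
  have "Y * Z = (Y * Pv) * Z" using PZ Y Pv Z by (metis assoc_mult_mat)
  moreover have "(Y * Pv) *\<^sub>v v = 0\<^sub>v P"
  proof -
    have "(Y * Pv) *\<^sub>v v = Y *\<^sub>v (Pv *\<^sub>v v)" using Y Pv v(1) by (rule assoc_mult_mat_vec)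
    then show ?thesis using Pvv Y by auto
  qed
  ultimately show ?thesis using mrank_mult_kernel[of "Y * Pv" P r Z Q v] Y Pv Z v by simp
qed



lemma prod_take_Suc: "k < length (n::nat list) \<Longrightarrow> prod_list (take (Suc k) n) = n!k * prod_list (take k n)"
proof -
  assume k: "k < length n"
  have "take (Suc k) n = take k n @ [n!k]" using k by (rule take_Suc_conv_app_nth)
  then have "prod_list (take (Suc k) n) = prod_list (take k n) * n!k"
    by (simp only: prod_list.append prod_list.Cons prod_list.Nil mult_1_right)
  then show ?thesis by (simp only: mult.commute)
qed

lemma prod_drop_nth: "k < length (n::nat list) \<Longrightarrow> prod_list (drop k n) = n!k * prod_list (drop (Suc k) n)"
  by (simp add: Cons_nth_drop_Suc[symmetric])

lemma assoc4:
  fixes A B C D :: "'a::semiring_0 mat"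
  assumes "A \<in> carrier_mat a b" "B \<in> carrier_mat b c" "C \<in> carrier_mat c e" "D \<in> carrier_mat e f"
  shows "(A * B) * (C * D) = A * (B * C) * D"
proof -
  have "(A * B) * (C * D) = A * (B * (C * D))" using assms by (meson assoc_mult_mat mult_carrier_mat)
  also have "B * (C * D) = (B * C) * D" by (simp add: assoc_mult_mat[OF assms(2-4)])
  also have "A * ((B * C) * D) = (A * (B * C)) * D"
  proof -
    have BC: "B * C \<in> carrier_mat b e" using assms by simp
    show ?thesis using assoc_mult_mat[OF assms(1) BC assms(4)] by simp
  qed
  finally show ?thesis .
qed

lemma coreL_dims[simp]: "dim_row (coreL n r k C) = rr r (k-1) * n!(k-1)" "dim_col (coreL n r k C) = rr r k"
  unfolding coreL_def by simp_all

lemma coreR_dims[simp]: "dim_row (coreR n r k C) = rr r (k-1)" "dim_col (coreR n r k C) = n!(k-1) * rr r k"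
  unfolding coreR_def by simp_all

lemma coreL_carrier: "coreL n r k C \<in> carrier_mat (rr r (k-1) * n!(k-1)) (rr r k)"
  unfolding coreL_def by simp

lemma coreR_carrier: "coreR n r k C \<in> carrier_mat (rr r (k-1)) (n!(k-1) * rr r k)"
  unfolding coreR_def by simp

lemma Xle_carrier: "k \<le> length n \<Longrightarrow> Xle n r U k \<in> carrier_mat (prod_list (take k n)) (rr r k)"
proof (induction k)
  case 0 then show ?case by (simp add: rr_def)
next
  case (Suc k)
  then have IH: "Xle n r U k \<in> carrier_mat (prod_list (take k n)) (rr r k)" by simp
  have "Xle n r U (Suc k) = kron (1\<^sub>m (n!k)) (Xle n r U k) * coreL n r (Suc k) (U (Suc k))" by simp
  moreover have "dim_row (kron (1\<^sub>m (n!k)) (Xle n r U k)) = prod_list (take (Suc k) n)"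
    using IH prod_take_Suc[of k n] Suc.prems by simp
  moreover have "dim_col (coreL n r (Suc k) (U (Suc k))) = rr r (Suc k)" by simp
  ultimately show ?case by (intro carrier_matI) simp_all
qed

lemma rr_d: "length r + 1 = length n \<Longrightarrow> rr r (length n) = 1"
  by (simp add: rr_def)

lemma XgeT_aux_carrier:
  assumes "length r + 1 = length n"
  shows "m \<le> length n \<Longrightarrow> XgeT_aux n r U m \<in> carrier_mat (rr r (length n - m)) (prod_list (drop (length n - m) n))"
proof (induction m)
  case 0 then show ?case using rr_d[OF assms] by simp
next
  case (Suc m)
  define d where "d = length n"
  define k where "k = d - m - 1"
  have k: "d - m = Suc k" using Suc.prems unfolding d_def k_def by linarith
  have k2: "d - Suc m = k" using k by simp
  have kd: "k < d" using k by simp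
  have IH: "XgeT_aux n r U m \<in> carrier_mat (rr r (Suc k)) (prod_list (drop (Suc k) n))"
    using Suc k d_def by simp
  have e: "XgeT_aux n r U (Suc m) = coreR n r (Suc k) (U (Suc k)) * kron (XgeT_aux n r U m) (1\<^sub>m (n!k))"
    using k d_def by simp
  have "dim_row (coreR n r (Suc k) (U (Suc k))) = rr r k" by simp
  moreover have "dim_col (kron (XgeT_aux n r U m) (1\<^sub>m (n!k))) = prod_list (drop k n)"
    using IH prod_drop_nth[of k n] kd d_def by simp
  ultimately show ?case unfolding d_def[symmetric] k2 e by (intro carrier_matI) simp_all
qed

lemma XgeT_carrier:
  assumes "length r + 1 = length n" "k \<le> length n"
  shows "XgeT n r U (k+1) \<in> carrier_mat (rr r k) (prod_list (drop k n))"
proof -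
  have "XgeT n r U (k+1) = XgeT_aux n r U (length n - k)" unfolding XgeT_def by simp
  moreover have "length n - (length n - k) = k" using assms by simp
  ultimately show ?thesis using XgeT_aux_carrier[OF assms(1), of "length n - k" U] by simp
qed

lemma kron_one_left_mult:
  fixes X Y :: "real mat"
  assumes "dim_col X = dim_row Y"
  shows "kron (1\<^sub>m a) X * kron (1\<^sub>m a) Y = kron (1\<^sub>m a) (X * Y)"
  using kron_mult[of "1\<^sub>m a" "1\<^sub>m a" X Y] assms by simp

lemma Xle_orth:
  assumes orth: "\<forall>k\<in>{1..<length n}. (coreL n r k (U k))\<^sup>T * coreL n r k (U k) = 1\<^sub>m (rr r k)"
  shows "k < length n \<Longrightarrow> (Xle n r U k)\<^sup>T * Xle n r U k = 1\<^sub>m (rr r k)"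
proof (induction k)
  case 0 then show ?case by (simp add: rr_def)
next
  case (Suc k)
  define X where "X = Xle n r U k"
  define L where "L = coreL n r (Suc k) (U (Suc k))"
  have X: "X \<in> carrier_mat (prod_list (take k n)) (rr r k)" unfolding X_def using Xle_carrier Suc by simp
  have L: "L \<in> carrier_mat (n!k * rr r k) (rr r (Suc k))" unfolding L_def using coreL_carrier[of n r "Suc k"]
    by (simp add: mult.commute)
  have XX: "X\<^sup>T * X = 1\<^sub>m (rr r k)" using Suc unfolding X_def by simp
  have LL: "L\<^sup>T * L = 1\<^sub>m (rr r (Suc k))" using orth Suc.prems unfolding L_def by auto
  define K where "K = kron (1\<^sub>m (n!k)) X"
  have K: "K \<in> carrier_mat (n!k * prod_list (take k n)) (n!k * rr r k)" unfolding K_def using X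
    by (intro carrier_matI) auto
  have KK: "K\<^sup>T * K = 1\<^sub>m (n!k * rr r k)"
    unfolding K_def kron_transpose transpose_one
    using kron_one_left_mult[of "X\<^sup>T" X "n!k"] X XX kron_one by simp
  have "(Xle n r U (Suc k))\<^sup>T * Xle n r U (Suc k) = (K * L)\<^sup>T * (K * L)"
    unfolding K_def L_def X_def by simp
  also have "\<dots> = L\<^sup>T * (K\<^sup>T * K) * L"
    using K L by (simp add: transpose_mult assoc4[of "L\<^sup>T" _ _ "K\<^sup>T" _ K _ L])
  also have "\<dots> = L\<^sup>T * L" using KK L by simp
  finally show ?case using LL by simp
qed

lemma XgeT_aux_orth:
  assumes rl: "length r + 1 = length n"
    and orth: "\<forall>k\<in>{2..length n}. coreR n r k (U k) * (coreR n r k (U k))\<^sup>T = 1\<^sub>m (rr r (k-1))"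
  shows "m < length n \<Longrightarrow> XgeT_aux n r U m * (XgeT_aux n r U m)\<^sup>T = 1\<^sub>m (rr r (length n - m))"
proof (induction m)
  case 0 then show ?case using rr_d[OF rl] by simp
next
  case (Suc m)
  define d where "d = length n"
  define k where "k = d - m - 1"
  have k: "d - m = Suc k" using Suc.prems unfolding d_def k_def by linarith
  have k2: "d - Suc m = k" using k by simp
  have kd: "k < d" "k \<ge> 1" using k Suc.prems d_def by auto
  define G where "G = XgeT_aux n r U m"
  define R where "R = coreR n r (Suc k) (U (Suc k))"
  have G: "G \<in> carrier_mat (rr r (Suc k)) (prod_list (drop (Suc k) n))" unfolding G_def
    using XgeT_aux_carrier[OF rl, of m U] Suc.prems k d_def by simp
  have R0: "R \<in> carrier_mat (rr r k) (n!k * rr r (Suc k))" unfolding R_def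
    using coreR_carrier[of n r "Suc k"] by simp
  have R: "R \<in> carrier_mat (rr r k) (rr r (Suc k) * n!k)"
    using R0 by (metis mult.commute)
  have GG: "G * G\<^sup>T = 1\<^sub>m (rr r (Suc k))" using Suc k unfolding G_def d_def by simp
  have "Suc k \<in> {2..length n}" using kd d_def by auto
  then have RR: "R * R\<^sup>T = 1\<^sub>m (rr r k)" using orth unfolding R_def by fastforce
  define K where "K = kron G (1\<^sub>m (n!k))"
  have K: "K \<in> carrier_mat (rr r (Suc k) * n!k) (prod_list (drop (Suc k) n) * n!k)"
    unfolding K_def using G by (intro carrier_matI) auto
  have KK: "K * K\<^sup>T = 1\<^sub>m (rr r (Suc k) * n!k)"
    unfolding K_def kron_transpose transpose_one
    using kron_mult[of G "G\<^sup>T" "1\<^sub>m (n!k)" "1\<^sub>m (n!k)"] G GG kron_one by simp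
  have e: "XgeT_aux n r U (Suc m) = R * K"
    unfolding K_def R_def G_def using k d_def by simp
  have "XgeT_aux n r U (Suc m) * (XgeT_aux n r U (Suc m))\<^sup>T = (R * K) * (R * K)\<^sup>T"
    unfolding e ..
  also have "\<dots> = R * (K * K\<^sup>T) * R\<^sup>T"
    using K R by (simp add: transpose_mult assoc4[of R _ _ K _ "K\<^sup>T" _ "R\<^sup>T"])
  also have "\<dots> = R * R\<^sup>T" using KK R by simp
  finally show ?case using RR k2 d_def by simp
qed




lemma mult_entry:
  fixes A B :: "'a::comm_semiring_0 mat"
  assumes "A \<in> carrier_mat a b" "B \<in> carrier_mat b c" "p < a" "s < c"
  shows "(A * B) $$ (p, s) = (\<Sum>q<b. A $$ (p, q) * B $$ (q, s))"
  using assms by (simp add: index_mult_mat scalar_prod_def lessThan_atLeast0)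

fun LP :: "cores \<Rightarrow> nat \<Rightarrow> nat list \<Rightarrow> real mat" where
  "LP C 0 ix = 1\<^sub>m 1"
| "LP C (Suc k) ix = LP C k ix * C (Suc k) (ix!k)"

fun RP :: "nat list \<Rightarrow> cores \<Rightarrow> nat \<Rightarrow> nat list \<Rightarrow> real mat" where
  "RP n C 0 ix = 1\<^sub>m 1"
| "RP n C (Suc m) ix = C (length n - m) (ix!(length n - m - 1)) * RP n C m ix"

lemma tidxD: "ix \<in> tidx n \<Longrightarrow> length ix = length n \<and> (\<forall>k<length n. ix!k < n!k)"
  by (simp add: tidx_def)

lemma core_at:
  assumes cok: "\<forall>k\<in>{1..length n}. core_ok n r k (C k)" and ix: "ix \<in> tidx n" and k: "k < length n"
  shows "C (Suc k) (ix!k) \<in> carrier_mat (rr r k) (rr r (Suc k))"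
proof -
  have "core_ok n r (Suc k) (C (Suc k))" using cok k by auto
  moreover have "ix!k < n!k" using tidxD[OF ix] k by auto
  ultimately show ?thesis unfolding core_ok_def by auto
qed

lemma LP_carrier:
  assumes cok: "\<forall>k\<in>{1..length n}. core_ok n r k (C k)" and ix: "ix \<in> tidx n"
  shows "k \<le> length n \<Longrightarrow> LP C k ix \<in> carrier_mat 1 (rr r k)"
proof (induction k)
  case 0 then show ?case by (simp add: rr_def)
next
  case (Suc k)
  then show ?case using core_at[OF cok ix, of k] by simp
qed

lemma RP_carrier:
  assumes cok: "\<forall>k\<in>{1..length n}. core_ok n r k (C k)" and ix: "ix \<in> tidx n"
    and rl: "length r + 1 = length n"
  shows "m \<le> length n \<Longrightarrow> RP n C m ix \<in> carrier_mat (rr r (length n - m)) 1"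
proof (induction m)
  case 0 then show ?case using rr_d[OF rl] by simp
next
  case (Suc m)
  define d where "d = length n"
  define k where "k = d - m - 1"
  have k: "d - m = Suc k" using Suc.prems unfolding d_def k_def by linarith
  have k2: "d - Suc m = k" using k by simp
  have IH: "RP n C m ix \<in> carrier_mat (rr r (Suc k)) 1" using Suc k d_def by simp
  have e: "RP n C (Suc m) ix = C (Suc k) (ix!k) * RP n C m ix" using k d_def by simp
  have kd: "k < length n" using k d_def by simp
  show ?case unfolding d_def[symmetric] k2 e using core_at[OF cok ix kd] IH by simp
qed

lemma lin_take_Suc:
  assumes "ix \<in> tidx n" "k < length n"
  shows "lin (take (Suc k) n) (take (Suc k) ix) = lin (take k n) (take k ix) + prod_list (take k n) * ix!k"
proof -
  have l: "length ix = length n" using tidxD[OF assms(1)] by simp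
  have "take (Suc k) n = take k n @ [n!k]" using assms(2) by (rule take_Suc_conv_app_nth)
  moreover have "take (Suc k) ix = take k ix @ [ix!k]" using assms(2) l by (simp add: take_Suc_conv_app_nth)
  ultimately show ?thesis using lin_snoc[of "take k ix" "take k n" "n!k" "ix!k"] l by simp
qed

lemma lin_take_less:
  assumes "ix \<in> tidx n" "k \<le> length n"
  shows "lin (take k n) (take k ix) < prod_list (take k n)"
  using tidxD[OF assms(1)] assms(2) by (intro lin_less) auto

lemma lin_drop_less:
  assumes "ix \<in> tidx n"
  shows "lin (drop k n) (drop k ix) < prod_list (drop k n)"
  using tidxD[OF assms(1)] by (intro lin_less) auto

lemma lin_drop_nth:
  assumes "ix \<in> tidx n" "k < length n"
  shows "lin (drop k n) (drop k ix) = ix!k + n!k * lin (drop (Suc k) n) (drop (Suc k) ix)"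
proof -
  have l: "length ix = length n" using tidxD[OF assms(1)] by simp
  have "drop k n = n!k # drop (Suc k) n" using assms(2) by (simp add: Cons_nth_drop_Suc)
  moreover have "drop k ix = ix!k # drop (Suc k) ix" using assms(2) l by (simp add: Cons_nth_drop_Suc)
  ultimately show ?thesis by simp
qed

lemma Xle_entry:
  assumes cok: "\<forall>k\<in>{1..length n}. core_ok n r k (C k)" and ix: "ix \<in> tidx n"
  shows "k \<le> length n \<Longrightarrow> \<beta> < rr r k \<Longrightarrow>
     Xle n r C k $$ (lin (take k n) (take k ix), \<beta>) = LP C k ix $$ (0, \<beta>)"
proof (induction k arbitrary: \<beta>)
  case 0 then show ?case by (simp add: rr_def)
next
  case (Suc k)
  define a where "a = lin (take k n) (take k ix)"
  define P where "P = prod_list (take k n)"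
  define i where "i = ix!k"
  define nk where "nk = n!k"
  define X where "X = Xle n r C k"
  define L where "L = coreL n r (Suc k) (C (Suc k))"
  have kd: "k < length n" using Suc.prems by simp
  have aP: "a < P" unfolding a_def P_def using lin_take_less[OF ix] kd by simp
  have i: "i < nk" unfolding i_def nk_def using tidxD[OF ix] kd by simp
  have p: "lin (take (Suc k) n) (take (Suc k) ix) = a + P * i"
    unfolding a_def P_def i_def using lin_take_Suc[OF ix kd] .
  have X: "X \<in> carrier_mat P (rr r k)" unfolding X_def P_def using Xle_carrier kd by simp
  have K: "kron (1\<^sub>m nk) X \<in> carrier_mat (nk * P) (nk * rr r k)" using X by (intro carrier_matI) auto
  have L: "L \<in> carrier_mat (nk * rr r k) (rr r (Suc k))" unfolding L_def nk_def
    by (intro carrier_matI) simp_all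
  have pP: "a + P * i < nk * P"
  proof -
    have "a + P * i < P + P * i" using aP by simp
    also have "\<dots> = P * (i + 1)" by simp
    also have "\<dots> \<le> P * nk" using i by (intro mult_le_mono2) simp
    finally show ?thesis by (simp add: mult.commute)
  qed
  have pdiv: "(a + P * i) div P = i" "(a + P * i) mod P = a" using aP by auto
  have "Xle n r C (Suc k) $$ (a + P * i, \<beta>) = (kron (1\<^sub>m nk) X * L) $$ (a + P * i, \<beta>)"
    unfolding X_def L_def nk_def by simp
  also have "\<dots> = (\<Sum>q<nk * rr r k. kron (1\<^sub>m nk) X $$ (a + P * i, q) * L $$ (q, \<beta>))"
    using K L pP Suc.prems by (intro mult_entry) auto
  also have "\<dots> = (\<Sum>i'<nk. \<Sum>\<alpha><rr r k. kron (1\<^sub>m nk) X $$ (a + P * i, i' * rr r k + \<alpha>) * L $$ (i' * rr r k + \<alpha>, \<beta>))"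
    by (rule sum_split_prod)
  also have "\<dots> = (\<Sum>i'<nk. \<Sum>\<alpha><rr r k. (if i = i' then X $$ (a, \<alpha>) * C (Suc k) i' $$ (\<alpha>, \<beta>) else 0))"
  proof (intro sum.cong refl)
    fix i' \<alpha> assume i': "i' \<in> {..<nk}" and al: "\<alpha> \<in> {..<rr r k}"
    have q: "i' * rr r k + \<alpha> < nk * rr r k"
    proof -
      have "i' * rr r k + \<alpha> < i' * rr r k + rr r k" using al by simp
      also have "\<dots> = (i'+1) * rr r k" by simp
      also have "\<dots> \<le> nk * rr r k" using i' by (intro mult_le_mono1) simp
      finally show ?thesis .
    qed
    have qd: "(i' * rr r k + \<alpha>) div rr r k = i'" "(i' * rr r k + \<alpha>) mod rr r k = \<alpha>" using al by auto
    have Lq: "L $$ (i' * rr r k + \<alpha>, \<beta>) = C (Suc k) i' $$ (\<alpha>, \<beta>)"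
    proof -
      have q': "i' * rr r k + \<alpha> < rr r k * n!k" using q unfolding nk_def by (metis mult.commute)
      show ?thesis unfolding L_def coreL_def using q' qd Suc.prems by simp
    qed
    have Kq: "kron (1\<^sub>m nk) X $$ (a + P * i, i' * rr r k + \<alpha>) = (if i = i' then 1 else 0) * X $$ (a, \<alpha>)"
      using pP q X pdiv qd i i' by (simp add: kron_index)
    show "kron (1\<^sub>m nk) X $$ (a + P * i, i' * rr r k + \<alpha>) * L $$ (i' * rr r k + \<alpha>, \<beta>) =
        (if i = i' then X $$ (a, \<alpha>) * C (Suc k) i' $$ (\<alpha>, \<beta>) else 0)"
      using Kq Lq by simp
  qed
  also have "\<dots> = (\<Sum>\<alpha><rr r k. X $$ (a, \<alpha>) * C (Suc k) i $$ (\<alpha>, \<beta>))"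
    using i by (subst sum_single_nat[of i]) auto
  also have "\<dots> = (\<Sum>\<alpha><rr r k. LP C k ix $$ (0, \<alpha>) * C (Suc k) i $$ (\<alpha>, \<beta>))"
    using Suc.IH kd unfolding X_def a_def by simp
  also have "\<dots> = (LP C k ix * C (Suc k) i) $$ (0, \<beta>)"
    using mult_entry[OF LP_carrier[OF cok ix, of k] core_at[OF cok ix kd], of 0 \<beta>] Suc.prems kd
    unfolding i_def by simp
  also have "\<dots> = LP C (Suc k) ix $$ (0, \<beta>)" unfolding i_def by simp
  finally show ?case using p by simp
qed


lemma XgeT_aux_entry:
  assumes cok: "\<forall>k\<in>{1..length n}. core_ok n r k (C k)" and ix: "ix \<in> tidx n"
    and rl: "length r + 1 = length n"
  shows "m \<le> length n \<Longrightarrow> \<alpha> < rr r (length n - m) \<Longrightarrow>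
     XgeT_aux n r C m $$ (\<alpha>, lin (drop (length n - m) n) (drop (length n - m) ix)) = RP n C m ix $$ (\<alpha>, 0)"
proof (induction m arbitrary: \<alpha>)
  case 0
  have "drop (length n) ix = []" using tidxD[OF ix] by simp
  then show ?case using 0 rr_d[OF rl] by simp
next
  case (Suc m)
  define d where "d = length n"
  define k where "k = d - m - 1"
  have k: "d - m = Suc k" using Suc.prems unfolding d_def k_def by linarith
  have k2: "d - Suc m = k" using k by simp
  have kd: "k < length n" using k d_def by simp
  define b where "b = lin (drop (Suc k) n) (drop (Suc k) ix)"
  define Q where "Q = prod_list (drop (Suc k) n)"
  define i where "i = ix!k"
  define nk where "nk = n!k"
  define G where "G = XgeT_aux n r C m"
  define R where "R = coreR n r (Suc k) (C (Suc k))"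
  have al: "\<alpha> < rr r k" using Suc.prems k2 d_def by simp
  have bQ: "b < Q" unfolding b_def Q_def using lin_drop_less[OF ix] .
  have i: "i < nk" unfolding i_def nk_def using tidxD[OF ix] kd by simp
  have q: "lin (drop k n) (drop k ix) = i + nk * b"
    unfolding b_def nk_def i_def using lin_drop_nth[OF ix kd] .
  have G: "G \<in> carrier_mat (rr r (Suc k)) Q" unfolding G_def Q_def
    using XgeT_aux_carrier[OF rl, of m C] Suc.prems k d_def by simp
  have K: "kron G (1\<^sub>m nk) \<in> carrier_mat (rr r (Suc k) * nk) (Q * nk)" using G by (intro carrier_matI) auto
  have R: "R \<in> carrier_mat (rr r k) (rr r (Suc k) * nk)" unfolding R_def nk_def
    by (intro carrier_matI) (simp_all add: mult.commute)
  have qQ: "i + nk * b < Q * nk"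
  proof -
    have "i + nk * b < nk + nk * b" using i by simp
    also have "\<dots> = nk * (b + 1)" by simp
    also have "\<dots> \<le> nk * Q" using bQ by (intro mult_le_mono2) simp
    finally show ?thesis by (simp add: mult.commute)
  qed
  have qdiv: "(i + nk * b) div nk = b" "(i + nk * b) mod nk = i" using i by auto
  have e: "XgeT_aux n r C (Suc m) = R * kron G (1\<^sub>m nk)"
    unfolding R_def G_def nk_def using k d_def by simp
  have "XgeT_aux n r C (Suc m) $$ (\<alpha>, i + nk * b) = (\<Sum>t<rr r (Suc k) * nk. R $$ (\<alpha>, t) * kron G (1\<^sub>m nk) $$ (t, i + nk * b))"
    unfolding e using K R qQ al by (intro mult_entry) auto
  also have "\<dots> = (\<Sum>\<beta><rr r (Suc k). \<Sum>i'<nk. R $$ (\<alpha>, \<beta> * nk + i') * kron G (1\<^sub>m nk) $$ (\<beta> * nk + i', i + nk * b))"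
    by (rule sum_split_prod)
  also have "\<dots> = (\<Sum>\<beta><rr r (Suc k). \<Sum>i'<nk. (if i' = i then C (Suc k) i' $$ (\<alpha>, \<beta>) * G $$ (\<beta>, b) else 0))"
  proof (intro sum.cong refl)
    fix \<beta> i' assume be: "\<beta> \<in> {..<rr r (Suc k)}" and i': "i' \<in> {..<nk}"
    have t: "\<beta> * nk + i' < rr r (Suc k) * nk"
    proof -
      have "\<beta> * nk + i' < \<beta> * nk + nk" using i' by simp
      also have "\<dots> = (\<beta>+1) * nk" by simp
      also have "\<dots> \<le> rr r (Suc k) * nk" using be by (intro mult_le_mono1) simp
      finally show ?thesis .
    qed
    have td: "(\<beta> * nk + i') div nk = \<beta>" "(\<beta> * nk + i') mod nk = i'" using i' by auto
    have Rt: "R $$ (\<alpha>, \<beta> * nk + i') = C (Suc k) i' $$ (\<alpha>, \<beta>)"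
    proof -
      have t': "\<beta> * nk + i' < n!k * rr r (Suc k)" using t unfolding nk_def by (metis mult.commute)
      have td': "(\<beta> * n!k + i') div n!k = \<beta>" "(\<beta> * n!k + i') mod n!k = i'" using td unfolding nk_def .
      show ?thesis unfolding R_def coreR_def using t' td' al unfolding nk_def by simp
    qed
    have Kt: "kron G (1\<^sub>m nk) $$ (\<beta> * nk + i', i + nk * b) = G $$ (\<beta>, b) * (if i' = i then 1 else 0)"
      using t qQ G td qdiv i i' by (simp add: kron_index)
    show "R $$ (\<alpha>, \<beta> * nk + i') * kron G (1\<^sub>m nk) $$ (\<beta> * nk + i', i + nk * b) =
        (if i' = i then C (Suc k) i' $$ (\<alpha>, \<beta>) * G $$ (\<beta>, b) else 0)"
      using Rt Kt by simp
  qed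
  also have "\<dots> = (\<Sum>\<beta><rr r (Suc k). C (Suc k) i $$ (\<alpha>, \<beta>) * G $$ (\<beta>, b))"
    using i by (intro sum.cong refl) (subst sum_single_nat[of i], auto)
  also have "\<dots> = (\<Sum>\<beta><rr r (Suc k). C (Suc k) i $$ (\<alpha>, \<beta>) * RP n C m ix $$ (\<beta>, 0))"
  proof (intro sum.cong refl)
    fix \<beta> assume "\<beta> \<in> {..<rr r (Suc k)}"
    then have "G $$ (\<beta>, b) = RP n C m ix $$ (\<beta>, 0)"
      using Suc.IH[of \<beta>] Suc.prems k d_def unfolding G_def b_def by simp
    then show "C (Suc k) i $$ (\<alpha>, \<beta>) * G $$ (\<beta>, b) = C (Suc k) i $$ (\<alpha>, \<beta>) * RP n C m ix $$ (\<beta>, 0)" by simp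
  qed
  also have "\<dots> = (C (Suc k) i * RP n C m ix) $$ (\<alpha>, 0)"
  proof -
    have RPc: "RP n C m ix \<in> carrier_mat (rr r (Suc k)) 1"
      using RP_carrier[OF cok ix rl, of m] Suc.prems k d_def by simp
    show ?thesis using mult_entry[OF core_at[OF cok ix kd] RPc, of \<alpha> 0] al unfolding i_def by simp
  qed
  also have "\<dots> = RP n C (Suc m) ix $$ (\<alpha>, 0)" unfolding i_def using k d_def by simp
  finally show ?case using q k2 d_def by simp
qed

lemma RP_split:
  assumes cok: "\<forall>k\<in>{1..length n}. core_ok n r k (C k)" and ix: "ix \<in> tidx n"
    and rl: "length r + 1 = length n"
  shows "k \<le> length n \<Longrightarrow> RP n C (length n) ix = LP C k ix * RP n C (length n - k) ix"
proof (induction k)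
  case 0
  have "RP n C (length n) ix \<in> carrier_mat 1 1" using RP_carrier[OF cok ix rl, of "length n"] by (simp add: rr_def)
  then show ?case by simp
next
  case (Suc k)
  define d where "d = length n"
  define m where "m = d - Suc k"
  have kd: "k < length n" using Suc.prems by simp
  have m: "d - k = Suc m" "d - m - 1 = k" "d - m = Suc k" using kd d_def m_def by auto
  have e: "RP n C (d - k) ix = C (Suc k) (ix!k) * RP n C m ix" using m d_def by simp
  have "RP n C d ix = LP C k ix * (C (Suc k) (ix!k) * RP n C m ix)" using Suc e d_def by simp
  also have "\<dots> = (LP C k ix * C (Suc k) (ix!k)) * RP n C m ix"
  proof -
    have RPc: "RP n C m ix \<in> carrier_mat (rr r (Suc k)) 1"
      using RP_carrier[OF cok ix rl, of m] m d_def m_def by simp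
    have LPc: "LP C k ix \<in> carrier_mat 1 (rr r k)" using LP_carrier[OF cok ix, of k] kd by simp
    show ?thesis using assoc_mult_mat[OF LPc core_at[OF cok ix kd] RPc] by simp
  qed
  finally show ?case using m_def d_def by simp
qed

lemma tt_val_RP:
  "ix \<in> tidx n \<Longrightarrow> tt_val (length n) C ix = RP n C (length n) ix $$ (0, 0)"
proof -
  have gen: "j \<ge> 1 \<Longrightarrow> j \<le> length n + 1 \<Longrightarrow>
     foldr (\<lambda>k M. C k (ix!(k-1)) * M) [j..<length n+1] (1\<^sub>m 1) = RP n C (length n + 1 - j) ix" for j
  proof (induction "length n + 1 - j" arbitrary: j)
    case 0 then show ?case by simp
  next
    case (Suc t)
    have j: "j < length n + 1" using Suc.hyps by simp
    have "[j..<length n+1] = j # [Suc j..<length n+1]" using j by (simp add: upt_conv_Cons)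
    then have "foldr (\<lambda>k M. C k (ix!(k-1)) * M) [j..<length n+1] (1\<^sub>m 1)
        = C j (ix!(j-1)) * RP n C (length n + 1 - Suc j) ix"
      using Suc.hyps(1)[of "Suc j"] Suc.hyps(2) Suc.prems by simp
    moreover have "length n + 1 - j = Suc (length n + 1 - Suc j)" using j by simp
    moreover have "length n - (length n + 1 - Suc j) = j" "j - 1 = length n - (length n + 1 - Suc j) - 1"
      using j Suc.prems by auto
    ultimately show ?case by simp
  qed
  show "ix \<in> tidx n \<Longrightarrow> ?thesis" unfolding tt_val_def using gen[of 1] by simp
qed

lemma tt_flat:
  assumes cok: "\<forall>k\<in>{1..length n}. core_ok n r k (C k)" and ix: "ix \<in> tidx n"
    and rl: "length r + 1 = length n" and k: "k \<le> length n"
  shows "tt_val (length n) C ix =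
    (Xle n r C k * XgeT n r C (k+1)) $$ (lin (take k n) (take k ix), lin (drop k n) (drop k ix))"
proof -
  define d where "d = length n"
  have dk: "d - (d - k) = k" using k d_def by simp
  have XG: "XgeT n r C (k+1) = XgeT_aux n r C (d - k)" unfolding XgeT_def d_def by simp
  have "(Xle n r C k * XgeT n r C (k+1)) $$ (lin (take k n) (take k ix), lin (drop k n) (drop k ix))
     = (\<Sum>\<beta><rr r k. Xle n r C k $$ (lin (take k n) (take k ix), \<beta>) *
            XgeT n r C (k+1) $$ (\<beta>, lin (drop k n) (drop k ix)))"
    using Xle_carrier[OF k] XgeT_carrier[OF rl k] lin_take_less[OF ix k] lin_drop_less[OF ix]
    by (intro mult_entry)
  also have "\<dots> = (\<Sum>\<beta><rr r k. LP C k ix $$ (0, \<beta>) * RP n C (d - k) ix $$ (\<beta>, 0))"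
  proof (intro sum.cong refl)
    fix \<beta> assume b: "\<beta> \<in> {..<rr r k}"
    have "XgeT_aux n r C (d - k) $$ (\<beta>, lin (drop (d - (d-k)) n) (drop (d - (d-k)) ix)) = RP n C (d-k) ix $$ (\<beta>, 0)"
      using XgeT_aux_entry[OF cok ix rl, of "d - k" \<beta>] b dk d_def by simp
    then show "Xle n r C k $$ (lin (take k n) (take k ix), \<beta>) * XgeT n r C (k+1) $$ (\<beta>, lin (drop k n) (drop k ix))
       = LP C k ix $$ (0, \<beta>) * RP n C (d - k) ix $$ (\<beta>, 0)"
      using Xle_entry[OF cok ix k, of \<beta>] b XG dk by simp
  qed
  also have "\<dots> = (LP C k ix * RP n C (d - k) ix) $$ (0, 0)"
    using LP_carrier[OF cok ix k] RP_carrier[OF cok ix rl, of "d-k"] dk d_def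
    by (intro mult_entry[symmetric]) auto
  also have "\<dots> = tt_val (length n) C ix"
    using RP_split[OF cok ix rl k] tt_val_RP[OF ix] d_def by simp
  finally show ?thesis by simp
qed




lemma ix_of_tidx:
  assumes npos: "\<forall>k<length n. n!k > 0" and k: "k \<le> length n"
  shows "unlin (take k n) a @ unlin (drop k n) b \<in> tidx n"
proof -
  let ?ix = "unlin (take k n) a @ unlin (drop k n) b"
  have len: "length ?ix = length n" using k by simp
  have "?ix ! j < n ! j" if j: "j < length n" for j
  proof (cases "j < k")
    case True
    have "\<forall>j<length (take k n). take k n ! j > 0" using npos by auto
    then have "unlin (take k n) a ! j < take k n ! j" using True k by (intro unlin_nth_less) auto
    then show ?thesis using True k by (simp add: nth_append)
  next
    case False
    have "\<forall>j<length (drop k n). drop k n ! j > 0" using npos by auto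
    then have "unlin (drop k n) b ! (j - k) < drop k n ! (j - k)" using False j k by (intro unlin_nth_less) auto
    then show ?thesis using False k j by (simp add: nth_append)
  qed
  then show ?thesis using len unfolding tidx_def by auto
qed

lemma take_drop_ix_of:
  assumes k: "k \<le> length n"
  shows "take k (unlin (take k n) a @ unlin (drop k n) b) = unlin (take k n) a"
        "drop k (unlin (take k n) a @ unlin (drop k n) b) = unlin (drop k n) b"
  using k by simp_all

lemma flat_index:
  "a < prod_list (take k n) \<Longrightarrow> b < prod_list (drop k n) \<Longrightarrow>
   flat n k Z $$ (a, b) = Z (unlin (take k n) a @ unlin (drop k n) b)"
  unfolding flat_def by simp

lemma flat_dims[simp]: "dim_row (flat n k Z) = prod_list (take k n)" "dim_col (flat n k Z) = prod_list (drop k n)"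
  unfolding flat_def by simp_all

lemma flat_carrier: "flat n k Z \<in> carrier_mat (prod_list (take k n)) (prod_list (drop k n))"
  by (intro carrier_matI) simp_all

lemma flat_unflat:
  assumes npos: "\<forall>k<length n. n!k > 0" and k: "k \<le> length n"
    and M: "M \<in> carrier_mat (prod_list (take k n)) (prod_list (drop k n))"
  shows "flat n k (unflat n k M) = M"
proof (rule eq_matI)
  fix a b assume a: "a < dim_row M" and b: "b < dim_col M"
  then have a': "a < prod_list (take k n)" and b': "b < prod_list (drop k n)" using M by auto
  let ?ix = "unlin (take k n) a @ unlin (drop k n) b"
  have "flat n k (unflat n k M) $$ (a, b) = unflat n k M ?ix" using a' b' by (rule flat_index)
  also have "\<dots> = M $$ (lin (take k n) (take k ?ix), lin (drop k n) (drop k ?ix))"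
    unfolding unflat_def using ix_of_tidx[OF npos k] by simp
  also have "\<dots> = M $$ (a, b)" by (simp only: take_drop_ix_of[OF k] lin_unlin[OF a'] lin_unlin[OF b'])
  finally show "flat n k (unflat n k M) $$ (a, b) = M $$ (a, b)" .
qed (use M in auto)

lemma flat_entry:
  assumes ix: "ix \<in> tidx n" and k: "k \<le> length n"
  shows "flat n k W $$ (lin (take k n) (take k ix), lin (drop k n) (drop k ix)) = W ix"
proof -
  have l: "length ix = length n" and lt: "\<forall>j<length n. ix!j < n!j" using tidxD[OF ix] by auto
  have u1: "unlin (take k n) (lin (take k n) (take k ix)) = take k ix"
    using l lt by (intro unlin_lin) auto
  have u2: "unlin (drop k n) (lin (drop k n) (drop k ix)) = drop k ix"
    using l lt by (intro unlin_lin) auto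
  show ?thesis using flat_index[OF lin_take_less[OF ix k] lin_drop_less[OF ix]] u1 u2 by simp
qed

lemma flat_TT:
  assumes npos: "\<forall>k<length n. n!k > 0" and cok: "\<forall>k\<in>{1..length n}. core_ok n r k (C k)"
    and XC: "\<forall>ix\<in>tidx n. X ix = tt_val (length n) C ix"
    and rl: "length r + 1 = length n" and k: "k \<le> length n"
  shows "flat n k X = Xle n r C k * XgeT n r C (k+1)"
proof (rule eq_matI)
  have Xc: "Xle n r C k \<in> carrier_mat (prod_list (take k n)) (rr r k)" using Xle_carrier[OF k] .
  have Gc: "XgeT n r C (k+1) \<in> carrier_mat (rr r k) (prod_list (drop k n))" using XgeT_carrier[OF rl k] .
  fix a b assume a: "a < dim_row (Xle n r C k * XgeT n r C (k+1))" and b: "b < dim_col (Xle n r C k * XgeT n r C (k+1))"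
  then have a': "a < prod_list (take k n)" and b': "b < prod_list (drop k n)" using Xc Gc by auto
  let ?ix = "unlin (take k n) a @ unlin (drop k n) b"
  have ix: "?ix \<in> tidx n" using ix_of_tidx[OF npos k] .
  have "flat n k X $$ (a, b) = X ?ix" using a' b' by (rule flat_index)
  also have "\<dots> = tt_val (length n) C ?ix" using XC ix by simp
  also have "\<dots> = (Xle n r C k * XgeT n r C (k+1)) $$ (lin (take k n) (take k ?ix), lin (drop k n) (drop k ?ix))"
    using tt_flat[OF cok ix rl k] .
  also have "\<dots> = (Xle n r C k * XgeT n r C (k+1)) $$ (a, b)" by (simp only: take_drop_ix_of[OF k] lin_unlin[OF a'] lin_unlin[OF b'])
  finally show "flat n k X $$ (a, b) = (Xle n r C k * XgeT n r C (k+1)) $$ (a, b)" .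
qed (use Xle_carrier[OF k, of r C] XgeT_carrier[OF rl k, of C] in auto)


lemma rr_mid: "1 \<le> k \<Longrightarrow> k < length n \<Longrightarrow> length r + 1 = length n \<Longrightarrow> rr r k = r!(k-1)"
  unfolding rr_def by simp

lemma Mr_rank:
  assumes "X \<in> Mr n r" "1 \<le> k" "k < length n" "length r + 1 = length n"
  shows "mrank (flat n k X) = rr r k"
  using assms rr_mid[of k n r] unfolding Mr_def by auto

lemma gauge_L:
  fixes A A' R R' M :: "real mat"
  assumes A: "A \<in> carrier_mat P r" and A': "A' \<in> carrier_mat P r"
    and R: "R \<in> carrier_mat r Q" and R': "R' \<in> carrier_mat r Q"
    and MA: "M = A * R" and MA': "M = A' * R'" and AA: "A\<^sup>T * A = 1\<^sub>m r"
    and rk: "mrank M = r"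
  shows "A * A\<^sup>T * A' = A'"
proof (rule ccontr)
  define B where "B = A * A\<^sup>T * A'"
  have B: "B \<in> carrier_mat P r" unfolding B_def using A A' by simp
  assume "\<not> A * A\<^sup>T * A' = A'"
  then have "B \<noteq> A'" unfolding B_def by simp
  then obtain p al where p: "p < P" and al: "al < r" and ne: "A' $$ (p, al) \<noteq> B $$ (p, al)"
    using B A' by (metis carrier_matD eq_matI)
  define v where "v = vec r (\<lambda>a. A' $$ (p, a) - B $$ (p, a))"
  have v: "v \<in> carrier_vec r" "v \<noteq> 0\<^sub>v r"
  proof -
    show "v \<in> carrier_vec r" unfolding v_def by simp
    have "v $ al \<noteq> 0" unfolding v_def using al ne by simp
    then show "v \<noteq> 0\<^sub>v r" using al by auto
  qed
  have AAM: "A * A\<^sup>T * M = M"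
  proof -
    have "A * A\<^sup>T * M = A * (A\<^sup>T * A) * R" unfolding MA using A R by (simp add: assoc4[of A _ _ "A\<^sup>T" _ A _ R])
    then show ?thesis using AA A R MA by simp
  qed
  have AAt: "A * A\<^sup>T \<in> carrier_mat P P" using A by simp
  have BR: "B * R' = M"
  proof -
    have "B * R' = (A * A\<^sup>T) * (A' * R')" unfolding B_def by (rule assoc_mult_mat[OF AAt A' R'])
    then show ?thesis by (simp only: MA'[symmetric] AAM)
  qed
  have "(\<Sum>a<r. v $ a * R' $$ (a, j)) = 0" if j: "j < Q" for j
  proof -
    have "(\<Sum>a<r. v $ a * R' $$ (a, j)) = (\<Sum>a<r. A' $$ (p, a) * R' $$ (a, j)) - (\<Sum>a<r. B $$ (p, a) * R' $$ (a, j))"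
      unfolding v_def by (simp add: algebra_simps sum_subtractf)
    also have "\<dots> = (A' * R') $$ (p, j) - (B * R') $$ (p, j)"
      using mult_entry[OF A' R' p j] mult_entry[OF B R' p j] by simp
    also have "\<dots> = 0" using BR MA' by simp
    finally show ?thesis .
  qed
  then have "mrank (A' * R') < r" using mrank_mult_cokernel[OF A' R' v] by blast
  then show False using rk MA' by simp
qed

lemma gauge_R:
  fixes G G' L L' M :: "real mat"
  assumes G: "G \<in> carrier_mat r Q" and G': "G' \<in> carrier_mat r Q"
    and L: "L \<in> carrier_mat P r" and L': "L' \<in> carrier_mat P r"
    and MG: "M = L * G" and MG': "M = L' * G'" and GG: "G * G\<^sup>T = 1\<^sub>m r"
    and rk: "mrank M = r"
  shows "G' * G\<^sup>T * G = G'"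
proof (rule ccontr)
  define B where "B = G' * G\<^sup>T * G"
  have B: "B \<in> carrier_mat r Q" unfolding B_def using G G' by simp
  assume "\<not> G' * G\<^sup>T * G = G'"
  then have "B \<noteq> G'" unfolding B_def by simp
  then obtain al q where al: "al < r" and q: "q < Q" and ne: "G' $$ (al, q) \<noteq> B $$ (al, q)"
    using B G' by (metis carrier_matD eq_matI)
  define u where "u = vec r (\<lambda>a. G' $$ (a, q) - B $$ (a, q))"
  have u: "u \<in> carrier_vec r" "u \<noteq> 0\<^sub>v r"
  proof -
    show "u \<in> carrier_vec r" unfolding u_def by simp
    have "u $ al \<noteq> 0" unfolding u_def using al ne by simp
    then show "u \<noteq> 0\<^sub>v r" using al by auto
  qed
  have MGG: "M * G\<^sup>T * G = M"
  proof -
    have "M * G\<^sup>T * G = L * (G * G\<^sup>T) * G" unfolding MG using L G by (simp add: assoc4[of L _ _ G _ "G\<^sup>T" _ G])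
    then show ?thesis using GG L G MG by simp
  qed
  have LB: "L' * B = M"
  proof -
    have GGt: "G' * G\<^sup>T \<in> carrier_mat r r" using G G' by simp
    have Gt: "G\<^sup>T \<in> carrier_mat Q r" using G by simp
    have "L' * B = (L' * (G' * G\<^sup>T)) * G" unfolding B_def by (rule assoc_mult_mat[OF L' GGt G, symmetric])
    also have "L' * (G' * G\<^sup>T) = (L' * G') * G\<^sup>T" by (rule assoc_mult_mat[OF L' G' Gt, symmetric])
    finally show ?thesis by (simp only: MG'[symmetric] MGG)
  qed
  have "L' *\<^sub>v u = 0\<^sub>v P"
  proof (rule eq_vecI)
    fix p assume "p < dim_vec (0\<^sub>v P :: real vec)"
    then have p: "p < P" by simp
    have "(L' *\<^sub>v u) $ p = (\<Sum>a<r. L' $$ (p, a) * u $ a)"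
      using L' u p by (simp add: scalar_prod_def lessThan_atLeast0)
    also have "\<dots> = (\<Sum>a<r. L' $$ (p, a) * G' $$ (a, q)) - (\<Sum>a<r. L' $$ (p, a) * B $$ (a, q))"
      unfolding u_def by (simp add: algebra_simps sum_subtractf)
    also have "\<dots> = (L' * G') $$ (p, q) - (L' * B) $$ (p, q)"
      using mult_entry[OF L' G' p q] mult_entry[OF L' B p q] by simp
    also have "\<dots> = 0" using LB MG' by simp
    finally show "(L' *\<^sub>v u) $ p = 0\<^sub>v P $ p" using p by simp
  qed (use L' in simp)
  then have "mrank (L' * G') < r" using mrank_mult_kernel[OF L' G' u] by blast
  then show False using rk MG' by simp
qed





lemma Xle_cong: "(\<forall>j\<in>{1..k}. C j = C' j) \<Longrightarrow> Xle n r C k = Xle n r C' k"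
  by (induction k) auto

lemma XgeT_aux_cong:
  "m \<le> length n \<Longrightarrow> (\<forall>j\<in>{length n - m + 1..length n}. C j = C' j) \<Longrightarrow> XgeT_aux n r C m = XgeT_aux n r C' m"
proof (induction m)
  case 0 then show ?case by simp
next
  case (Suc m)
  have "C (length n - m) = C' (length n - m)" using Suc.prems by auto
  moreover have "XgeT_aux n r C m = XgeT_aux n r C' m"
  proof (rule Suc.IH)
    show "m \<le> length n" using Suc.prems by simp
    show "\<forall>j\<in>{length n - m + 1..length n}. C j = C' j"
    proof
      fix j assume "j \<in> {length n - m + 1..length n}"
      then have "j \<in> {length n - Suc m + 1..length n}" using Suc.prems by auto
      then show "C j = C' j" using Suc.prems by blast
    qed
  qed
  ultimately show ?case by simp
qed

lemma Pk_out: "ix \<notin> tidx n \<Longrightarrow> Pk n r Y k Z ix = 0"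
  by (auto simp: Pk_def Let_def unflat_def)

lemma DP_tensor:
  assumes DP: "is_DP n r c j Z D"
  shows "D \<in> tensors n"
  unfolding tensors_def
proof (intro CollectI allI impI)
  fix ix assume ix: "ix \<notin> tidx n"
  have lim: "((\<lambda>t. (Pk n r (c t) j Z ix - Pk n r (c 0) j Z ix) / t) \<longlongrightarrow> D ix) (at 0)"
    using DP unfolding is_DP_def by blast
  have "(\<lambda>t::real. (Pk n r (c t) j Z ix - Pk n r (c 0) j Z ix) / t) = (\<lambda>t. 0)"
    using Pk_out[OF ix] by simp
  then have "((\<lambda>t::real. 0::real) \<longlongrightarrow> D ix) (at 0)" using lim by simp
  moreover have "((\<lambda>t::real. 0::real) \<longlongrightarrow> 0) (at 0)" by simp
  ultimately show "D ix = 0" using tendsto_unique[OF at_neq_bot] by blast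
qed

theorem lemma11:
  fixes n r :: "nat list" and X V Z D :: "nat list \<Rightarrow> real"
    and U Ut :: cores and c :: "real \<Rightarrow> nat list \<Rightarrow> real" and i j :: nat
  assumes d2: "length n \<ge> 2"
    and npos: "\<forall>k<length n. n!k > 0"
    and rlen: "length r = length n - 1"
    and XM: "X \<in> Mr n r"
    and UL: "left_orth_TT n r U X"
    and UR: "right_orth_TT n r Ut X"
    and VT: "V \<in> tangent_space n r X"
    and curve: "smooth_curve n r c X V"
    and Zt: "Z \<in> tensors n"
    and ij: "i \<in> {1..length n}" "j \<in> {1..length n}"
    and DP: "is_DP n r c j Z D"
  shows "let W = Pk n r X i D in
     (\<exists>Z'\<in>tensors n. W = Pk n r X i Z') \<and>
     (\<exists>dV. core_ok n r i dV
        \<and> (\<forall>ix\<in>tidx n. W ix = tt_val (length n)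
               (\<lambda>k. if k < i then U k else if k = i then dV else Ut k) ix)
        \<and> flat n i W = kron (1\<^sub>m (n!(i-1))) (Xle n r U (i-1)) * coreL n r i dV * XgeT n r Ut (i+1)
        \<and> (\<forall>B \<in> carrier_mat (n!(i-1) * rr r (i-1)) (rr r i).
              flat n i W = kron (1\<^sub>m (n!(i-1))) (Xle n r U (i-1)) * B * XgeT n r Ut (i+1)
              \<longrightarrow> B = coreL n r i dV))"
  proof -
  have rl: "length r + 1 = length n" using rlen d2 by simp
  have i1: "1 \<le> i" "i \<le> length n" using ij(1) by auto
  define k0 where "k0 = i - 1"
  have ik: "i = Suc k0" "k0 < length n" using i1 k0_def by auto
  have XU: "\<forall>ix\<in>tidx n. X ix = tt_val (length n) U ix"
    and cokU: "\<forall>k\<in>{1..length n}. core_ok n r k (U k)"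
    and orthU: "\<forall>k\<in>{1..<length n}. (coreL n r k (U k))\<^sup>T * coreL n r k (U k) = 1\<^sub>m (rr r k)"
    using UL unfolding left_orth_TT_def is_TT_def by auto
  have XUt: "\<forall>ix\<in>tidx n. X ix = tt_val (length n) Ut ix"
    and cokUt: "\<forall>k\<in>{1..length n}. core_ok n r k (Ut k)"
    and orthUt: "\<forall>k\<in>{2..length n}. coreR n r k (Ut k) * (coreR n r k (Ut k))\<^sup>T = 1\<^sub>m (rr r (k-1))"
    using UR unfolding right_orth_TT_def is_TT_def by auto
  define U' where "U' = (SOME U. left_orth_TT n r U X)"
  define Ut' where "Ut' = (SOME V. right_orth_TT n r V X)"
  have UL': "left_orth_TT n r U' X" unfolding U'_def by (rule someI[where P="\<lambda>U. left_orth_TT n r U X", OF UL])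
  have UR': "right_orth_TT n r Ut' X" unfolding Ut'_def by (rule someI[where P="\<lambda>V. right_orth_TT n r V X", OF UR])
  have XU': "\<forall>ix\<in>tidx n. X ix = tt_val (length n) U' ix"
    and cokU': "\<forall>k\<in>{1..length n}. core_ok n r k (U' k)"
    using UL' unfolding left_orth_TT_def is_TT_def by auto
  have XUt': "\<forall>ix\<in>tidx n. X ix = tt_val (length n) Ut' ix"
    and cokUt': "\<forall>k\<in>{1..length n}. core_ok n r k (Ut' k)"
    using UR' unfolding right_orth_TT_def is_TT_def by auto
  define nk where "nk = n!k0"
  define A where "A = Xle n r U k0"
  define A' where "A' = Xle n r U' k0"
  define L' where "L' = coreL n r i (U' i)"
  define B' where "B' = Xle n r U' i"
  define G where "G = XgeT n r Ut (i+1)"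
  define G' where "G' = XgeT n r Ut' (i+1)"
  define F where "F = flat n i D"
  define P0 where "P0 = prod_list (take k0 n)"
  define Qi where "Qi = prod_list (drop i n)"
  define r0 where "r0 = rr r k0"
  define ri where "ri = rr r i"
  have Ac: "A \<in> carrier_mat P0 r0" unfolding A_def P0_def r0_def using Xle_carrier ik by simp
  have A'c: "A' \<in> carrier_mat P0 r0" unfolding A'_def P0_def r0_def using Xle_carrier ik by simp
  have Gc: "G \<in> carrier_mat ri Qi" unfolding G_def ri_def Qi_def using XgeT_carrier[OF rl i1(2)] .
  have G'c: "G' \<in> carrier_mat ri Qi" unfolding G'_def ri_def Qi_def using XgeT_carrier[OF rl i1(2)] .
  have L'c: "L' \<in> carrier_mat (nk * r0) ri" unfolding L'_def nk_def r0_def ri_def using ik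
    by (intro carrier_matI) (simp_all add: mult.commute)
  have B'_eq: "B' = kron (1\<^sub>m nk) A' * L'" unfolding B'_def A'_def L'_def nk_def using ik by simp
  have Pi: "prod_list (take i n) = nk * P0" unfolding nk_def P0_def using prod_take_Suc[OF ik(2)] ik by simp
  have Fc: "F \<in> carrier_mat (nk * P0) Qi" unfolding F_def Qi_def using flat_carrier[of n i D] Pi by simp
  define Mw where "Mw = (if i < length n then (kron (1\<^sub>m nk) (A' * A'\<^sup>T) - B' * B'\<^sup>T) * F * (G'\<^sup>T * G')
     else kron (1\<^sub>m nk) (A' * A'\<^sup>T) * F)"
  define W where "W = Pk n r X i D"
  have W_eq: "W = unflat n i Mw"
    unfolding W_def Pk_def Let_def Mw_def U'_def[symmetric] Ut'_def[symmetric]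
    by (simp add: A'_def B'_def G'_def F_def nk_def k0_def)
  have Mwc: "Mw \<in> carrier_mat (nk * P0) Qi"
    unfolding Mw_def using Ac A'c Gc G'c L'c Fc B'_eq by (auto intro!: minus_carrier_mat)
  have flatW: "flat n i W = Mw" unfolding W_eq using flat_unflat[OF npos i1(2)] Mwc Pi Qi_def by simp
  have gL: "A * A\<^sup>T * A' = A'"
  proof (cases "k0 = 0")
    case True then show ?thesis unfolding A_def A'_def by simp
  next
    case False
    then have k1: "1 \<le> k0" by simp
    show ?thesis
    proof (rule gauge_L[OF Ac A'c])
      show "XgeT n r U (k0+1) \<in> carrier_mat r0 (prod_list (drop k0 n))" unfolding r0_def
        using XgeT_carrier[OF rl] ik by simp
      show "XgeT n r U' (k0+1) \<in> carrier_mat r0 (prod_list (drop k0 n))" unfolding r0_def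
        using XgeT_carrier[OF rl] ik by simp
      show "flat n k0 X = A * XgeT n r U (k0+1)" unfolding A_def using flat_TT[OF npos cokU XU rl] ik by simp
      show "flat n k0 X = A' * XgeT n r U' (k0+1)" unfolding A'_def using flat_TT[OF npos cokU' XU' rl] ik by simp
      show "A\<^sup>T * A = 1\<^sub>m r0" unfolding A_def r0_def using Xle_orth[OF orthU] ik by simp
      show "mrank (flat n k0 X) = r0" unfolding r0_def using Mr_rank[OF XM k1 ik(2) rl] .
    qed
  qed
  have GG: "G * G\<^sup>T = 1\<^sub>m ri"
  proof -
    have "G = XgeT_aux n r Ut (length n - i)" unfolding G_def XgeT_def by simp
    moreover have "length n - (length n - i) = i" using i1 by simp
    ultimately show ?thesis unfolding ri_def using XgeT_aux_orth[OF rl orthUt, of "length n - i"] i1 by simp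
  qed
  have gR: "G' * G\<^sup>T * G = G'"
  proof (cases "i = length n")
    case True
    then have "G = 1\<^sub>m 1" "G' = 1\<^sub>m 1" unfolding G_def G'_def XgeT_def by simp_all
    then show ?thesis by simp
  next
    case False
    then have i2: "i < length n" using i1 by simp
    show ?thesis
    proof (rule gauge_R[OF Gc G'c])
      show "Xle n r Ut i \<in> carrier_mat (prod_list (take i n)) ri" unfolding ri_def using Xle_carrier i1 by simp
      show "Xle n r Ut' i \<in> carrier_mat (prod_list (take i n)) ri" unfolding ri_def using Xle_carrier i1 by simp
      show "flat n i X = Xle n r Ut i * G" unfolding G_def using flat_TT[OF npos cokUt XUt rl i1(2)] .
      show "flat n i X = Xle n r Ut' i * G'" unfolding G'_def using flat_TT[OF npos cokUt' XUt' rl i1(2)] .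
      show "G * G\<^sup>T = 1\<^sub>m ri" by (rule GG)
      show "mrank (flat n i X) = ri" unfolding ri_def using Mr_rank[OF XM i1(1) i2 rl] .
    qed
  qed
  have AA: "A\<^sup>T * A = 1\<^sub>m r0" unfolding A_def r0_def using Xle_orth[OF orthU] ik by simp
  define KA where "KA = kron (1\<^sub>m nk) A"
  have KAc: "KA \<in> carrier_mat (nk * P0) (nk * r0)" unfolding KA_def using Ac by (intro carrier_matI) auto
  have KAtc: "KA\<^sup>T \<in> carrier_mat (nk * r0) (nk * P0)" using KAc by simp
  have KAKA: "KA\<^sup>T * KA = 1\<^sub>m (nk * r0)"
    unfolding KA_def kron_transpose transpose_one
    using kron_one_left_mult[of "A\<^sup>T" A nk] Ac AA kron_one by simp
  have KAKAt: "KA * KA\<^sup>T = kron (1\<^sub>m nk) (A * A\<^sup>T)"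
    unfolding KA_def kron_transpose transpose_one
    using kron_one_left_mult[of A "A\<^sup>T" nk] Ac by simp
  define KA' where "KA' = kron (1\<^sub>m nk) A'"
  have KA'c: "KA' \<in> carrier_mat (nk * P0) (nk * r0)" unfolding KA'_def using A'c by (intro carrier_matI) auto
  have KK': "kron (1\<^sub>m nk) (A * A\<^sup>T) * KA' = KA'"
    unfolding KA'_def using kron_one_left_mult[of "A * A\<^sup>T" A' nk] Ac A'c gL by simp
  obtain Y where Yc: "Y \<in> carrier_mat (nk * r0) Qi" and MwY: "Mw = KA' * Y"
  proof (cases "i < length n")
    case True
    define Y where "Y = (kron (1\<^sub>m nk) (A'\<^sup>T) - L' * B'\<^sup>T) * F * (G'\<^sup>T * G')"
    have B'c: "B' \<in> carrier_mat (nk * P0) ri" using B'_eq KA'c L'c unfolding KA'_def by simp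
    have Ktc: "kron (1\<^sub>m nk) (A'\<^sup>T) \<in> carrier_mat (nk * r0) (nk * P0)" using A'c by (intro carrier_matI) auto
    have LBc: "L' * B'\<^sup>T \<in> carrier_mat (nk * r0) (nk * P0)" using L'c B'c by simp
    have "KA' * (kron (1\<^sub>m nk) (A'\<^sup>T) - L' * B'\<^sup>T) = KA' * kron (1\<^sub>m nk) (A'\<^sup>T) - KA' * (L' * B'\<^sup>T)"
      using mult_minus_distrib_mat[OF KA'c Ktc LBc] .
    also have "KA' * kron (1\<^sub>m nk) (A'\<^sup>T) = kron (1\<^sub>m nk) (A' * A'\<^sup>T)"
      unfolding KA'_def using kron_one_left_mult[of A' "A'\<^sup>T" nk] A'c by simp
    also have "KA' * (L' * B'\<^sup>T) = B' * B'\<^sup>T"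
    proof -
      have B'tc: "B'\<^sup>T \<in> carrier_mat ri (nk * P0)" using B'c by simp
      have B'K: "KA' * L' = B'" using B'_eq KA'_def by simp
      have "KA' * (L' * B'\<^sup>T) = (KA' * L') * B'\<^sup>T" using assoc_mult_mat[OF KA'c L'c B'tc] by simp
      then show ?thesis by (simp only: B'K)
    qed
    finally have KY: "KA' * (kron (1\<^sub>m nk) (A'\<^sup>T) - L' * B'\<^sup>T) = kron (1\<^sub>m nk) (A' * A'\<^sup>T) - B' * B'\<^sup>T" .
    have Y0c: "kron (1\<^sub>m nk) (A'\<^sup>T) - L' * B'\<^sup>T \<in> carrier_mat (nk * r0) (nk * P0)" using minus_carrier_mat[OF LBc] .
    have GGc: "G'\<^sup>T * G' \<in> carrier_mat Qi Qi" using G'c by simp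
    have "Mw = (KA' * (kron (1\<^sub>m nk) (A'\<^sup>T) - L' * B'\<^sup>T)) * F * (G'\<^sup>T * G')"
      unfolding Mw_def KY using True by simp
    also have "\<dots> = KA' * Y"
    proof -
      define Y0 where "Y0 = kron (1\<^sub>m nk) (A'\<^sup>T) - L' * B'\<^sup>T"
      have Y0c': "Y0 \<in> carrier_mat (nk * r0) (nk * P0)" unfolding Y0_def by (rule Y0c)
      have Y0F: "Y0 * F \<in> carrier_mat (nk * r0) Qi" using Y0c' Fc by simp
      have "(KA' * Y0) * F * (G'\<^sup>T * G') = (KA' * (Y0 * F)) * (G'\<^sup>T * G')"
        using assoc_mult_mat[OF KA'c Y0c' Fc] by simp
      also have "\<dots> = KA' * ((Y0 * F) * (G'\<^sup>T * G'))" by (rule assoc_mult_mat[OF KA'c Y0F GGc])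
      finally show ?thesis unfolding Y_def Y0_def .
    qed
    finally show ?thesis using that[of Y] Y_def Y0c Fc GGc by simp
  next
    case False
    define Y where "Y = kron (1\<^sub>m nk) (A'\<^sup>T) * F"
    have Ktc: "kron (1\<^sub>m nk) (A'\<^sup>T) \<in> carrier_mat (nk * r0) (nk * P0)" using A'c by (intro carrier_matI) auto
    have "KA' * kron (1\<^sub>m nk) (A'\<^sup>T) = kron (1\<^sub>m nk) (A' * A'\<^sup>T)"
      unfolding KA'_def using kron_one_left_mult[of A' "A'\<^sup>T" nk] A'c by simp
    then have "Mw = (KA' * kron (1\<^sub>m nk) (A'\<^sup>T)) * F" unfolding Mw_def using False by simp
    also have "\<dots> = KA' * Y" unfolding Y_def using KA'c Ktc Fc by simp
    finally show ?thesis using that[of Y] Y_def Ktc Fc by simp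
  qed
  obtain Zm where Zc: "Zm \<in> carrier_mat (nk * P0) ri" and MwZ: "Mw = Zm * G'"
  proof (cases "i < length n")
    case True
    define Zm where "Zm = (kron (1\<^sub>m nk) (A' * A'\<^sup>T) - B' * B'\<^sup>T) * F * G'\<^sup>T"
    have B'c: "B' \<in> carrier_mat (nk * P0) ri" using B'_eq KA'c L'c unfolding KA'_def by simp
    have K0c: "kron (1\<^sub>m nk) (A' * A'\<^sup>T) - B' * B'\<^sup>T \<in> carrier_mat (nk * P0) (nk * P0)"
      using A'c B'c by (intro minus_carrier_mat) (auto intro!: carrier_matI)
    have KFc: "(kron (1\<^sub>m nk) (A' * A'\<^sup>T) - B' * B'\<^sup>T) * F \<in> carrier_mat (nk * P0) Qi" using K0c Fc by simp
    have G'tc: "G'\<^sup>T \<in> carrier_mat Qi ri" using G'c by simp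
    have "Mw = Zm * G'" unfolding Mw_def Zm_def using True assoc_mult_mat[OF KFc G'tc G'c] by simp
    then show ?thesis using that[of Zm] K0c Fc G'c unfolding Zm_def by simp
  next
    case False
    then have "i = length n" using i1 by simp
    then have G'1: "G' = 1\<^sub>m 1" unfolding G'_def XgeT_def by simp
    have ri1: "ri = 1" unfolding ri_def using \<open>i = length n\<close> rr_d[OF rl] by simp
    have Q1: "Qi = 1" using G'c G'1 by auto
    have "Mw = Mw * G'" using Mwc G'1 Q1 by simp
    then show ?thesis using that[of Mw] Mwc ri1 Q1 by simp
  qed
  have H1: "KA * (KA\<^sup>T * Mw) = Mw"
  proof -
    have "KA * (KA\<^sup>T * Mw) = (KA * KA\<^sup>T) * Mw" using KAc KAtc Mwc by simp
    also have "\<dots> = kron (1\<^sub>m nk) (A * A\<^sup>T) * (KA' * Y)" unfolding KAKAt MwY ..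
    also have "\<dots> = (kron (1\<^sub>m nk) (A * A\<^sup>T) * KA') * Y"
      using KA'c Yc Ac by (intro assoc_mult_mat[symmetric]) (auto intro!: carrier_matI)
    also have "\<dots> = Mw" unfolding KK' MwY ..
    finally show ?thesis .
  qed
  have H2: "Mw * (G\<^sup>T * G) = Mw"
  proof -
    have Gtc: "G\<^sup>T \<in> carrier_mat Qi ri" using Gc by simp
    have GtGc: "G\<^sup>T * G \<in> carrier_mat Qi Qi" using Gc by simp
    have "Mw * (G\<^sup>T * G) = Zm * (G' * (G\<^sup>T * G))" unfolding MwZ by (rule assoc_mult_mat[OF Zc G'c GtGc])
    also have "G' * (G\<^sup>T * G) = G' * G\<^sup>T * G" by (rule assoc_mult_mat[OF G'c Gtc Gc, symmetric])
    finally show ?thesis using gR MwZ by simp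
  qed
  define Cm where "Cm = KA\<^sup>T * Mw * G\<^sup>T"
  have Gtc: "G\<^sup>T \<in> carrier_mat Qi ri" using Gc by simp
  have GtGc: "G\<^sup>T * G \<in> carrier_mat Qi Qi" using Gc by simp
  have KAtMwc: "KA\<^sup>T * Mw \<in> carrier_mat (nk * r0) Qi" using KAtc Mwc by simp
  have Cmc: "Cm \<in> carrier_mat (nk * r0) ri" unfolding Cm_def using KAtMwc Gtc by simp
  have MwC: "KA * Cm * G = Mw"
  proof -
    have "Cm * G = (KA\<^sup>T * Mw) * (G\<^sup>T * G)" unfolding Cm_def by (rule assoc_mult_mat[OF KAtMwc Gtc Gc])
    have "KA * Cm * G = KA * (Cm * G)" by (rule assoc_mult_mat[OF KAc Cmc Gc])
    also have "\<dots> = KA * ((KA\<^sup>T * Mw) * (G\<^sup>T * G))" unfolding \<open>Cm * G = (KA\<^sup>T * Mw) * (G\<^sup>T * G)\<close> ..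
    also have "\<dots> = (KA * (KA\<^sup>T * Mw)) * (G\<^sup>T * G)" by (rule assoc_mult_mat[OF KAc KAtMwc GtGc, symmetric])
    also have "\<dots> = Mw" unfolding H1 H2 ..
    finally show ?thesis .
  qed
  define dV where "dV = (\<lambda>t. mat r0 ri (\<lambda>(\<alpha>, \<beta>). Cm $$ (t * r0 + \<alpha>, \<beta>)))"
  have r0i: "rr r (i - 1) = r0" unfolding r0_def k0_def ..
  have nki: "n!(i-1) = nk" unfolding nk_def k0_def ..
  have cok_dV: "core_ok n r i dV" unfolding core_ok_def dV_def r0i ri_def[symmetric] by simp
  have coreL_dV: "coreL n r i dV = Cm"
  proof (rule eq_matI)
    fix a b assume a: "a < dim_row Cm" and b: "b < dim_col Cm"
    then have a': "a < nk * r0" and b': "b < ri" using Cmc by auto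
    then have r0p: "r0 > 0" by (cases r0) auto
    have a'': "a < r0 * nk" using a' by (simp add: mult.commute)
    have "coreL n r i dV $$ (a, b) = dV (a div r0) $$ (a mod r0, b)"
      unfolding coreL_def r0i nki using a'' b' ri_def by simp
    also have "\<dots> = Cm $$ (a div r0 * r0 + a mod r0, b)" unfolding dV_def using r0p b' by simp
    also have "\<dots> = Cm $$ (a, b)" by simp
    finally show "coreL n r i dV $$ (a, b) = Cm $$ (a, b)" .
  qed (use Cmc r0i nki ri_def in \<open>auto simp: mult.commute\<close>)
  have flat_main: "flat n i W = kron (1\<^sub>m (n!(i-1))) (Xle n r U (i-1)) * coreL n r i dV * XgeT n r Ut (i+1)"
    unfolding flatW coreL_dV nki using MwC unfolding KA_def A_def G_def k0_def by simp
  have uniq: "\<forall>B \<in> carrier_mat (n!(i-1) * rr r (i-1)) (rr r i).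
      flat n i W = kron (1\<^sub>m (n!(i-1))) (Xle n r U (i-1)) * B * XgeT n r Ut (i+1) \<longrightarrow> B = coreL n r i dV"
  proof (intro ballI impI)
    fix B assume Bc0: "B \<in> carrier_mat (n!(i-1) * rr r (i-1)) (rr r i)"
      and hB: "flat n i W = kron (1\<^sub>m (n!(i-1))) (Xle n r U (i-1)) * B * XgeT n r Ut (i+1)"
    have Bc: "B \<in> carrier_mat (nk * r0) ri" using Bc0 unfolding nki r0i ri_def .
    have MwB: "Mw = KA * B * G" using hB unfolding flatW KA_def A_def G_def nki k0_def .
    have KABc: "KA * B \<in> carrier_mat (nk * P0) ri" using KAc Bc by simp
    have e1: "KA\<^sup>T * (KA * B * G) = (KA\<^sup>T * (KA * B)) * G" by (rule assoc_mult_mat[OF KAtc KABc Gc, symmetric])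
    have e2: "KA\<^sup>T * (KA * B) = B" using assoc_mult_mat[OF KAtc KAc Bc, symmetric] KAKA Bc by simp
    have e3: "B * G * G\<^sup>T = B" using assoc_mult_mat[OF Bc Gc Gtc] GG Bc by simp
    have "Cm = B" unfolding Cm_def MwB e1 e2 e3 ..
    then show "B = coreL n r i dV" using coreL_dV by simp
  qed
  define Cx where "Cx = (\<lambda>k. if k < i then U k else if k = i then dV else Ut k)"
  have cokC: "\<forall>k\<in>{1..length n}. core_ok n r k (Cx k)"
    using cokU cokUt cok_dV unfolding Cx_def by auto
  have XleC: "Xle n r Cx i = KA * Cm"
  proof -
    have "Xle n r Cx k0 = A" unfolding A_def using ik by (intro Xle_cong) (auto simp: Cx_def)
    moreover have "Cx i = dV" unfolding Cx_def by simp
    ultimately show ?thesis using ik coreL_dV unfolding KA_def nk_def by simp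
  qed
  have XgeTC: "XgeT n r Cx (i+1) = G"
  proof -
    have "XgeT_aux n r Cx (length n - i) = XgeT_aux n r Ut (length n - i)"
      using i1 by (intro XgeT_aux_cong) (auto simp: Cx_def)
    then show ?thesis unfolding G_def XgeT_def by simp
  qed
  have ttW: "\<forall>ix\<in>tidx n. W ix = tt_val (length n) Cx ix"
  proof
    fix ix assume ix: "ix \<in> tidx n"
    have "W ix = flat n i W $$ (lin (take i n) (take i ix), lin (drop i n) (drop i ix))"
      using flat_entry[OF ix i1(2)] by simp
    also have "\<dots> = (Xle n r Cx i * XgeT n r Cx (i+1)) $$ (lin (take i n) (take i ix), lin (drop i n) (drop i ix))"
    proof -
      have "flat n i W = Xle n r Cx i * XgeT n r Cx (i+1)"
        unfolding flatW XleC XgeTC using MwC by simp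
      then show ?thesis by simp
    qed
    also have "\<dots> = tt_val (length n) Cx ix" using tt_flat[OF cokC ix rl i1(2)] by simp
    finally show "W ix = tt_val (length n) Cx ix" .
  qed
  have part1: "\<exists>Z'\<in>tensors n. W = Pk n r X i Z'" unfolding W_def using DP_tensor[OF DP] by blast
  show ?thesis unfolding Let_def W_def[symmetric]
    using part1 cok_dV ttW flat_main uniq unfolding Cx_def by blast
qed


end
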